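(* Let $n$ and $0<n_1<\cdots<n_d<n$ be integers with $m_1=n_1$, $m_k=n_k-n_{k-1}$ ($2\le k\le d$), $m_{d+1}=n-n_d$, and equip $\mathrm{Flag}(n_1,\dots,n_d;n)=\{(VJ_1V^{\mathsf T},\dots,VJ_dV^{\mathsf T}):V\in\mathrm{O}(n)\}\subseteq(\mathbb{R}^{n\times n})^d$ with the metric induced by the Frobenius inner product. Let $V(t)$ be a differentiable curve in $\mathrm{O}(n)$ with $\Lambda(t)=V(t)^{\mathsf T}\dot V(t)$, $\Lambda(k,k)\equiv0$ ($k=1,\dots,d+1$), and $c(t)=V(t)(J_1,\dots,J_d)V(t)^{\mathsf T}$. Let $Y(t)=V(t)\big(X(t)J_1-J_1X(t),\dots,X(t)J_d-J_dX(t)\big)V(t)^{\mathsf T}$ be a vector field along $c$, with $X(t)\in\mathfrak{so}(n)$ differentiable and $X(k,k)\equiv0$. Then $Y$ is parallel along $c$ if and only if for every $1\le k<q\le d+1$, \[ -2\dot X(k,q)+\sum_{\substack{1\le s\le d+1\\ s\ne k,q}}\big(X(k,s)\Lambda(s,q)-\Lambda(k,s)X(s,q)\big)+\delta_{q,d+1}\sum_{\substack{1\le l\le d\\ l\ne k}}\big(X(k,l)\Lambda(l,d+1)+\Lambda(k,l)X(l,d+1)\big)=0, \] equivalently \[ 2\dot X=\pi([X,\Lambda])+\begin{bmatrix}0&X_0\Lambda_1+\Lambda_0X_1\\-(X_0\Lambda_1+\Lambda_0X_1)^{\mathsf T}&0\end{bmatrix}, \] where $X=\begin{bmatrix}X_0&X_1\\-X_1^{\mathsf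 T}&0\end{bmatrix}$, $\Lambda=\begin{bmatrix}\Lambda_0&\Lambda_1\\-\Lambda_1^{\mathsf T}&0\end{bmatrix}$ with $X_0,\Lambda_0\in\mathbb{R}^{(n-m_{d+1})\times(n-m_{d+1})}$, $X_1,\Lambda_1\in\mathbb{R}^{(n-m_{d+1})\times m_{d+1}}$.
   Context: $J_k=\operatorname{diag}(-I_{m_1},\dots,-I_{m_{k-1}},I_{m_k},-I_{m_{k+1}},\dots,-I_{m_{d+1}})$. $V(X_1,\dots,X_d)V^{\mathsf T}$ denotes $(VX_1V^{\mathsf T},\dots,VX_dV^{\mathsf T})$. For an $n\times n$ matrix $M$, $M(p,q)$ denotes its $(p,q)$ block in the partition $n=m_1+\cdots+m_{d+1}$; $\delta$ is the Kronecker delta; $[X,\Lambda]=X\Lambda-\Lambda X$; for $M\in\mathfrak{so}(n)$, $\pi(M)$ is obtained from $M$ by setting all diagonal blocks $M(p,p)$ to zero. $Y$ is parallel along $c$ iff the orthogonal projection of $\dot Y(t)$ onto $\mathbb{T}_{c(t)}\mathrm{Flag}$ vanishes for all $t$. *)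

theory Defs
  imports "HOL-Analysis.Analysis"
begin

text \<open>Matrices of size n x n are represented as functions nat => nat => real; only
  entries with indices < n are meaningful. A d-tuple of matrices is a function
  nat => (nat => nat => real), meaningful on components 1..d.\<close>

type_synonym mat = "nat \<Rightarrow> nat \<Rightarrow> real"
type_synonym mtup = "nat \<Rightarrow> mat"

definition mmul :: "nat \<Rightarrow> mat \<Rightarrow> mat \<Rightarrow> mat" where
  "mmul n A B = (\<lambda>i j. \<Sum>r<n. A i r * B r j)"

definition mtr :: "mat \<Rightarrow> mat" where
  "mtr A = (\<lambda>i j. A j i)"

definition orthogonal_mat :: "nat \<Rightarrow> mat \<Rightarrow> bool" where
  "orthogonal_mat n V \<longleftrightarrow> (\<forall>i<n. \<forall>j<n. mmul n (mtr V) V i j = (if i = j then 1 else 0))"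

definition skew_mat :: "nat \<Rightarrow> mat \<Rightarrow> bool" where
  "skew_mat n X \<longleftrightarrow> (\<forall>i<n. \<forall>j<n. X i j = - X j i)"

text \<open>Block boundaries: n_0 = 0, n_k = ns k (1 <= k <= d), n_(d+1) = n.
  Block k (1 <= k <= d+1) consists of the indices n_(k-1) .. n_k - 1.\<close>

definition bnd :: "(nat \<Rightarrow> nat) \<Rightarrow> nat \<Rightarrow> nat \<Rightarrow> nat \<Rightarrow> nat" where
  "bnd ns d n k = (if k = 0 then 0 else if k \<le> d then ns k else n)"

definition blk :: "(nat \<Rightarrow> nat) \<Rightarrow> nat \<Rightarrow> nat \<Rightarrow> nat \<Rightarrow> nat set" where
  "blk ns d n k = {bnd ns d n (k - 1) ..< bnd ns d n k}"

definition Jmat :: "(nat \<Rightarrow> nat) \<Rightarrow> nat \<Rightarrow> nat \<Rightarrow> nat \<Rightarrow> mat" where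
  "Jmat ns d n k = (\<lambda>i j. if i = j then (if i \<in> blk ns d n k then 1 else -1) else 0)"

definition tup_eq :: "nat \<Rightarrow> nat \<Rightarrow> mtup \<Rightarrow> mtup \<Rightarrow> bool" where
  "tup_eq n d A B \<longleftrightarrow> (\<forall>k\<in>{1..d}. \<forall>i<n. \<forall>j<n. A k i j = B k i j)"

definition frob :: "nat \<Rightarrow> nat \<Rightarrow> mtup \<Rightarrow> mtup \<Rightarrow> real" where
  "frob n d A B = (\<Sum>k\<in>{1..d}. \<Sum>i<n. \<Sum>j<n. A k i j * B k i j)"

definition Flag :: "(nat \<Rightarrow> nat) \<Rightarrow> nat \<Rightarrow> nat \<Rightarrow> mtup set" where
  "Flag ns d n = {A. \<exists>V. orthogonal_mat n V \<and>
      tup_eq n d A (\<lambda>k. mmul n (mmul n V (Jmat ns d n k)) (mtr V))}"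

definition mat_deriv :: "nat \<Rightarrow> (real \<Rightarrow> mat) \<Rightarrow> mat \<Rightarrow> real \<Rightarrow> bool" where
  "mat_deriv n M D t \<longleftrightarrow> (\<forall>i<n. \<forall>j<n. ((\<lambda>s. M s i j) has_real_derivative D i j) (at t))"

definition tup_deriv :: "nat \<Rightarrow> nat \<Rightarrow> (real \<Rightarrow> mtup) \<Rightarrow> mtup \<Rightarrow> real \<Rightarrow> bool" where
  "tup_deriv n d M D t \<longleftrightarrow>
     (\<forall>k\<in>{1..d}. \<forall>i<n. \<forall>j<n. ((\<lambda>s. M s k i j) has_real_derivative D k i j) (at t))"

definition flag_tangent :: "(nat \<Rightarrow> nat) \<Rightarrow> nat \<Rightarrow> nat \<Rightarrow> mtup \<Rightarrow> mtup set" where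
  "flag_tangent ns d n p = {W. \<exists>\<gamma> \<Gamma>. (\<forall>s. \<gamma> s \<in> Flag ns d n) \<and> tup_eq n d (\<gamma> 0) p \<and>
      (\<forall>s. tup_deriv n d \<gamma> (\<Gamma> s) s) \<and> tup_eq n d W (\<Gamma> 0)}"

text \<open>Y is parallel along c iff for all t the orthogonal projection of dY/dt onto
  the tangent space at c(t) vanishes, i.e. dY/dt is Frobenius-orthogonal to it.\<close>
definition parallel_along :: "(nat \<Rightarrow> nat) \<Rightarrow> nat \<Rightarrow> nat \<Rightarrow> (real \<Rightarrow> mtup) \<Rightarrow> (real \<Rightarrow> mtup) \<Rightarrow> bool" where
  "parallel_along ns d n c Y \<longleftrightarrow>
     (\<forall>t. \<exists>D. tup_deriv n d Y D t \<and> (\<forall>W\<in>flag_tangent ns d n (c t). frob n d D W = 0))"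

end

theory Submission
  imports Defs "Jordan_Normal_Form.Determinant" "HOL-Library.Function_Algebras"
begin

lemma orth_right:
  assumes "Defs.orthogonal_mat n V" "i < n" "j < n"
  shows "mmul n V (mtr V) i j = (if i = j then 1 else 0)"
proof -
  define A where "A = mat n n (\<lambda>(i,j). V j i)"
  define B where "B = mat n n (\<lambda>(i,j). V i j)"
  have AB: "A * B = 1\<^sub>m n"
    using assms(1) unfolding Defs.orthogonal_mat_def mmul_def mtr_def
    by (auto simp: A_def B_def scalar_prod_def row_def col_def atLeast0LessThan intro!: eq_matI)
  have "B * A = 1\<^sub>m n"
    by (rule mat_mult_left_right_inverse[OF _ _ AB]) (auto simp: A_def B_def)
  hence "(B * A) $$ (i,j) = (1\<^sub>m n :: real mat) $$ (i,j)" by simp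
  thus ?thesis using assms(2,3)
    by (simp add: A_def B_def scalar_prod_def row_def col_def mmul_def mtr_def atLeast0LessThan)
qed
hide_const (open) Matrix.orthogonal_mat Matrix.mat
hide_type (open) Matrix.mat

definition meq :: "nat \<Rightarrow> Defs.mat \<Rightarrow> Defs.mat \<Rightarrow> bool" where
  "meq n A B \<longleftrightarrow> (\<forall>i<n. \<forall>j<n. A i j = B i j)"

definition Idm :: Defs.mat where "Idm = (\<lambda>i j. if i = j then 1 else 0)"

lemma meq_refl[simp]: "meq n A A" by (simp add: meq_def)
lemma meq_sym: "meq n A B \<Longrightarrow> meq n B A" by (simp add: meq_def)
lemma meq_trans[trans]: "meq n A B \<Longrightarrow> meq n B C \<Longrightarrow> meq n A C" by (simp add: meq_def)
lemma meq_eq_trans[trans]: "meq n A B \<Longrightarrow> B = C \<Longrightarrow> meq n A C" by simp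
lemma eq_meq_trans[trans]: "A = B \<Longrightarrow> meq n B C \<Longrightarrow> meq n A C" by simp
lemma meqD: "meq n A B \<Longrightarrow> i < n \<Longrightarrow> j < n \<Longrightarrow> A i j = B i j" by (simp add: meq_def)

lemma mmul_assoc: "mmul n (mmul n A B) C = mmul n A (mmul n B C)"
proof (intro ext)
  fix i j
  have "mmul n (mmul n A B) C i j = (\<Sum>r<n. \<Sum>u<n. A i u * B u r * C r j)"
    unfolding mmul_def by (simp add: sum_distrib_right)
  also have "\<dots> = (\<Sum>u<n. \<Sum>r<n. A i u * B u r * C r j)" by (rule sum.swap)
  also have "\<dots> = mmul n A (mmul n B C) i j"
    unfolding mmul_def by (simp add: sum_distrib_left mult.assoc)
  finally show "mmul n (mmul n A B) C i j = mmul n A (mmul n B C) i j" .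
qed

lemma mtr_mmul: "mtr (mmul n A B) = mmul n (mtr B) (mtr A)"
  unfolding mmul_def mtr_def by (auto simp: mult.commute intro!: ext)

lemma mtr_mtr[simp]: "mtr (mtr A) = A" by (simp add: mtr_def)
lemma mtr_add: "mtr (A + B) = mtr A + mtr B" by (simp add: mtr_def fun_eq_iff)
lemma mtr_diff: "mtr (A - B) = mtr A - mtr B" by (simp add: mtr_def fun_eq_iff)

lemma mmul_add_left: "mmul n (A + B) C = mmul n A C + mmul n B C"
  unfolding mmul_def by (simp add: fun_eq_iff distrib_right sum.distrib)
lemma mmul_add_right: "mmul n C (A + B) = mmul n C A + mmul n C B"
  unfolding mmul_def by (simp add: fun_eq_iff distrib_left sum.distrib)
lemma mmul_diff_left: "mmul n (A - B) C = mmul n A C - mmul n B C"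
  unfolding mmul_def by (simp add: fun_eq_iff left_diff_distrib sum_subtractf)
lemma mmul_diff_right: "mmul n C (A - B) = mmul n C A - mmul n C B"
  unfolding mmul_def by (simp add: fun_eq_iff right_diff_distrib sum_subtractf)
lemma mmul_zero_left[simp]: "mmul n 0 C = 0" unfolding mmul_def by (simp add: fun_eq_iff)
lemma mmul_zero_right[simp]: "mmul n C 0 = 0" unfolding mmul_def by (simp add: fun_eq_iff)

lemma mmul_cong: "meq n A A' \<Longrightarrow> meq n B B' \<Longrightarrow> meq n (mmul n A B) (mmul n A' B')"
  unfolding meq_def mmul_def by (auto intro!: sum.cong)

lemma meq_add: "meq n A A' \<Longrightarrow> meq n B B' \<Longrightarrow> meq n (A + B) (A' + B')"
  unfolding meq_def by auto
lemma meq_diff: "meq n A A' \<Longrightarrow> meq n B B' \<Longrightarrow> meq n (A - B) (A' - B')"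
  unfolding meq_def by auto
lemma meq_mtr: "meq n A A' \<Longrightarrow> meq n (mtr A) (mtr A')"
  unfolding meq_def mtr_def by auto

lemma mmul_Idm_left: "i < n \<Longrightarrow> mmul n Idm A i j = A i j"
  unfolding mmul_def Idm_def by (simp add: if_distrib[where f="\<lambda>x. x * _"] sum.delta sum.delta' cong: if_cong)
lemma mmul_Idm_right: "j < n \<Longrightarrow> mmul n A Idm i j = A i j"
  unfolding mmul_def Idm_def by (simp add: if_distrib[where f="\<lambda>x. _ * x"] sum.delta sum.delta' cong: if_cong)
lemma meq_Idm_left: "meq n (mmul n Idm A) A" by (simp add: meq_def mmul_Idm_left)
lemma meq_Idm_right: "meq n (mmul n A Idm) A" by (simp add: meq_def mmul_Idm_right)

lemma orth_left_meq: "Defs.orthogonal_mat n U \<Longrightarrow> meq n (mmul n (mtr U) U) Idm"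
  unfolding Defs.orthogonal_mat_def meq_def Idm_def by auto
lemma orth_right_meq: "Defs.orthogonal_mat n U \<Longrightarrow> meq n (mmul n U (mtr U)) Idm"
  using orth_right unfolding meq_def Idm_def by auto

lemma orth_cancel_left: "Defs.orthogonal_mat n U \<Longrightarrow> meq n (mmul n (mtr U) (mmul n U R)) R"
proof -
  assume o: "Defs.orthogonal_mat n U"
  have "mmul n (mtr U) (mmul n U R) = mmul n (mmul n (mtr U) U) R" by (simp add: mmul_assoc)
  also have "meq n \<dots> (mmul n Idm R)" by (rule mmul_cong[OF orth_left_meq[OF o] meq_refl])
  also have "meq n \<dots> R" by (rule meq_Idm_left)
  finally show ?thesis .
qed

lemma orth_cancel_right: "Defs.orthogonal_mat n U \<Longrightarrow> meq n (mmul n R (mmul n (mtr U) U)) R"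
proof -
  assume o: "Defs.orthogonal_mat n U"
  have "meq n (mmul n R (mmul n (mtr U) U)) (mmul n R Idm)" by (rule mmul_cong[OF meq_refl orth_left_meq[OF o]])
  also have "meq n \<dots> R" by (rule meq_Idm_right)
  finally show ?thesis .
qed

lemma mat_deriv_mmul:
  assumes "mat_deriv n A A' t" "mat_deriv n B B' t"
  shows "mat_deriv n (\<lambda>s. mmul n (A s) (B s)) (mmul n A' (B t) + mmul n (A t) B') t"
  unfolding mat_deriv_def
proof (intro allI impI)
  fix i j assume ij: "i < n" "j < n"
  have "((\<lambda>s. \<Sum>r<n. A s i r * B s r j) has_real_derivative (\<Sum>r<n. A' i r * B t r j + A t i r * B' r j)) (at t)"
  proof (rule DERIV_sum)
    fix r assume "r \<in> {..<n}"
    hence r: "r < n" by simp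
    have a: "((\<lambda>s. A s i r) has_real_derivative A' i r) (at t)" using assms(1) ij r unfolding mat_deriv_def by auto
    have b: "((\<lambda>s. B s r j) has_real_derivative B' r j) (at t)" using assms(2) ij r unfolding mat_deriv_def by auto
    show "((\<lambda>s. A s i r * B s r j) has_real_derivative A' i r * B t r j + A t i r * B' r j) (at t)"
      using DERIV_mult[OF a b] by (simp add: mult.commute)
  qed
  thus "((\<lambda>s. mmul n (A s) (B s) i j) has_real_derivative (mmul n A' (B t) + mmul n (A t) B') i j) (at t)"
    unfolding mmul_def by (simp add: sum.distrib)
qed

lemma mat_deriv_mtr: "mat_deriv n A A' t \<Longrightarrow> mat_deriv n (\<lambda>s. mtr (A s)) (mtr A') t"
  unfolding mat_deriv_def mtr_def by auto

lemma mat_deriv_const: "mat_deriv n (\<lambda>s. C) 0 t"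
  unfolding mat_deriv_def by auto

lemma mat_deriv_add: "mat_deriv n A A' t \<Longrightarrow> mat_deriv n B B' t \<Longrightarrow> mat_deriv n (\<lambda>s. A s + B s) (A' + B') t"
  unfolding mat_deriv_def by (auto intro!: derivative_eq_intros)
lemma mat_deriv_diff: "mat_deriv n A A' t \<Longrightarrow> mat_deriv n B B' t \<Longrightarrow> mat_deriv n (\<lambda>s. A s - B s) (A' - B') t"
  unfolding mat_deriv_def by (auto intro!: derivative_eq_intros)

lemma mat_deriv_cong: "mat_deriv n A D t \<Longrightarrow> meq n D D' \<Longrightarrow> mat_deriv n A D' t"
  unfolding mat_deriv_def meq_def by auto

lemma mat_deriv_unique: "mat_deriv n A D t \<Longrightarrow> mat_deriv n A D' t \<Longrightarrow> meq n D D'"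
  unfolding mat_deriv_def meq_def by (metis DERIV_unique)

lemma mat_deriv_fun_cong: "mat_deriv n A D t \<Longrightarrow> (\<And>s i j. i < n \<Longrightarrow> j < n \<Longrightarrow> A s i j = B s i j) \<Longrightarrow> mat_deriv n B D t"
  unfolding mat_deriv_def
proof (intro allI impI)
  fix i j assume h: "\<forall>i<n. \<forall>j<n. ((\<lambda>s. A s i j) has_real_derivative D i j) (at t)"
    and e: "\<And>s i j. i < n \<Longrightarrow> j < n \<Longrightarrow> A s i j = B s i j" and ij: "i < n" "j < n"
  have "(\<lambda>s. A s i j) = (\<lambda>s. B s i j)" using e ij by auto
  thus "((\<lambda>s. B s i j) has_real_derivative D i j) (at t)" using h ij by metis
qed

lemma tup_deriv_iff: "tup_deriv n d M D t \<longleftrightarrow> (\<forall>k\<in>{1..d}. mat_deriv n (\<lambda>s. M s k) (D k) t)"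
  unfolding tup_deriv_def mat_deriv_def by auto

locale blocks =
  fixes n d :: nat and ns :: "nat \<Rightarrow> nat"
  assumes d_pos: "d \<ge> 1"
    and ns_first: "0 < ns 1" and ns_mono: "\<forall>k. 1 \<le> k \<and> k < d \<longrightarrow> ns k < ns (Suc k)"
    and ns_last: "ns d < n"
begin

abbreviation "bd \<equiv> bnd ns d n"
abbreviation "B \<equiv> blk ns d n"

lemma bnd_step: "k \<le> d \<Longrightarrow> bd k < bd (Suc k)"
  using d_pos ns_first ns_mono ns_last unfolding bnd_def
  by (cases "k = 0") (auto, metis Suc_le_eq le_neq_implies_less)

lemma bnd_strict: "k < l \<Longrightarrow> l \<le> d + 1 \<Longrightarrow> bd k < bd l"
proof (induction l)
  case 0 thus ?case by simp
next
  case (Suc l)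
  show ?case
  proof (cases "k = l")
    case True thus ?thesis using bnd_step Suc.prems by simp
  next
    case False
    hence "bd k < bd l" using Suc by simp
    also have "bd l < bd (Suc l)" using bnd_step Suc.prems by simp
    finally show ?thesis .
  qed
qed

lemma bnd_mono: "k \<le> l \<Longrightarrow> l \<le> d + 1 \<Longrightarrow> bd k \<le> bd l"
  using bnd_strict by (cases "k = l") (auto intro: less_imp_le)

lemma bnd_top: "bd (d+1) = n" by (simp add: bnd_def)
lemma bnd_d: "bd d = ns d" using d_pos by (simp add: bnd_def)
lemma bnd_zero: "bd 0 = 0" by (simp add: bnd_def)

definition bof :: "nat \<Rightarrow> nat" where "bof i = (LEAST p. i < bd p)"

lemma bof_props:
  assumes "i < n"
  shows "bof i \<in> {1..d+1}" "i \<in> B (bof i)"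
proof -
  have ex: "i < bd (d+1)" using assms bnd_top by simp
  have lt: "i < bd (bof i)" unfolding bof_def by (rule LeastI[of _ "d+1"], rule ex)
  have le: "bof i \<le> d + 1" unfolding bof_def by (rule Least_le, rule ex)
  have pos: "bof i \<ge> 1" using lt bnd_zero by (cases "bof i") auto
  have "\<not> i < bd (bof i - 1)" unfolding bof_def by (rule not_less_Least) (use pos in \<open>simp add: bof_def\<close>)
  thus "bof i \<in> {1..d+1}" "i \<in> B (bof i)" using lt le pos by (auto simp: blk_def)
qed

lemma blk_lt_n: "p \<in> {1..d+1} \<Longrightarrow> i \<in> B p \<Longrightarrow> i < n"
  using bnd_mono[of p "d+1"] bnd_top by (auto simp: blk_def)

lemma blk_unique:
  assumes "p \<in> {1..d+1}" "i \<in> B p"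
  shows "bof i = p"
proof -
  have i: "i < n" using blk_lt_n assms by blast
  note bp = bof_props[OF i]
  show ?thesis
  proof (rule ccontr)
    assume "bof i \<noteq> p"
    then consider "bof i < p" | "p < bof i" by linarith
    thus False
    proof cases
      case 1
      hence "bd (bof i) \<le> bd (p - 1)" using bnd_mono assms(1) by auto
      thus False using bp assms by (auto simp: blk_def)
    next
      case 2
      hence "bd p \<le> bd (bof i - 1)" using bnd_mono bp(1) by auto
      thus False using bp assms by (auto simp: blk_def)
    qed
  qed
qed

lemma in_blk_iff: "i < n \<Longrightarrow> p \<in> {1..d+1} \<Longrightarrow> i \<in> B p \<longleftrightarrow> bof i = p"
  using blk_unique bof_props by blast

lemma lt_N_iff: "i < n \<Longrightarrow> i < ns d \<longleftrightarrow> bof i \<le> d"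
proof -
  assume i: "i < n"
  note bp = bof_props[OF i]
  show ?thesis
  proof
    assume "i < ns d"
    show "bof i \<le> d"
    proof (rule ccontr)
      assume "\<not> bof i \<le> d"
      hence "bof i = d+1" using bp by auto
      thus False using bp \<open>i < ns d\<close> bnd_d by (auto simp: blk_def)
    qed
  next
    assume "bof i \<le> d"
    hence "bd (bof i) \<le> bd d" using bnd_mono by auto
    thus "i < ns d" using bp bnd_d by (auto simp: blk_def)
  qed
qed

lemma same_blk_iff: "i < n \<Longrightarrow> j < n \<Longrightarrow> (\<exists>p\<in>{1..d+1}. i \<in> B p \<and> j \<in> B p) \<longleftrightarrow> bof i = bof j"
  using in_blk_iff bof_props by metis

lemma blk_sum: "m \<le> d + 1 \<Longrightarrow> (\<Sum>s\<in>{1..m}. \<Sum>r\<in>B s. f r) = (\<Sum>r<bd m. f r)"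
proof (induction m)
  case 0 thus ?case by (simp add: bnd_zero)
next
  case (Suc m)
  have "(\<Sum>s\<in>{1..Suc m}. \<Sum>r\<in>B s. f r) = (\<Sum>s\<in>{1..m}. \<Sum>r\<in>B s. f r) + (\<Sum>r\<in>B (Suc m). f r)"
    by simp
  also have "\<dots> = (\<Sum>r<bd m. f r) + (\<Sum>r\<in>{bd m..<bd (Suc m)}. f r)"
    using Suc by (simp add: blk_def)
  also have "\<dots> = (\<Sum>r<bd (Suc m). f r)"
    using bnd_mono[of m "Suc m"] Suc.prems
    by (simp add: lessThan_atLeast0 sum.atLeastLessThan_concat)
  finally show ?case .
qed

lemma blk_sum_all: "(\<Sum>s\<in>{1..d+1}. \<Sum>r\<in>B s. f r) = (\<Sum>r<n. f r)"
  using blk_sum[of "d+1"] bnd_top by simp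
lemma blk_sum_d: "(\<Sum>s\<in>{1..d}. \<Sum>r\<in>B s. f r) = (\<Sum>r<ns d. f r)"
  using blk_sum[of "d"] bnd_d by simp

end

context blocks
begin

abbreviation "J \<equiv> Jmat ns d n"
definition Jd :: "nat \<Rightarrow> nat \<Rightarrow> real" where "Jd k i = (if i \<in> B k then 1 else -1)"
definition ind :: "nat \<Rightarrow> nat \<Rightarrow> real" where "ind k x = (if k = x then 1 else 0)"
definition ee :: "nat \<Rightarrow> nat \<Rightarrow> nat \<Rightarrow> real" where "ee k i j = Jd k j - Jd k i"
definition dd :: "nat \<Rightarrow> nat \<Rightarrow> real" where "dd x y = (if x = y \<and> x \<in> {1..d} then 1 else 0)"

lemma mmul_J_right: "j < n \<Longrightarrow> mmul n A (J k) i j = A i j * Jd k j"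
  unfolding mmul_def Jmat_def Jd_def
  by (simp add: if_distrib[where f="\<lambda>x. _ * x"] sum.delta sum.delta' cong: if_cong)
lemma mmul_J_left: "i < n \<Longrightarrow> mmul n (J k) A i j = Jd k i * A i j"
  unfolding mmul_def Jmat_def Jd_def
  by (simp add: if_distrib[where f="\<lambda>x. x * _"] sum.delta sum.delta' cong: if_cong)

lemma Jd_ind: "i < n \<Longrightarrow> k \<in> {1..d+1} \<Longrightarrow> Jd k i = 2 * ind k (bof i) - 1"
  using in_blk_iff[of i k] by (auto simp: Jd_def ind_def)

lemma ee_ind: "i < n \<Longrightarrow> j < n \<Longrightarrow> k \<in> {1..d} \<Longrightarrow> ee k i j = 2 * (ind k (bof j) - ind k (bof i))"
  by (simp add: ee_def Jd_ind)

lemma sum_ind2: "(\<Sum>k\<in>{1..d}. ind k a * ind k c) = dd a c"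
proof -
  have "(\<Sum>k\<in>{1..d}. ind k a * ind k c) = (\<Sum>k\<in>{1..d}. if k = a then (if a = c then 1 else 0) else 0)"
    by (rule sum.cong) (auto simp: ind_def)
  also have "\<dots> = dd a c" by (simp add: sum.delta' dd_def)
  finally show ?thesis .
qed

lemma SS: "(\<Sum>k\<in>{1..d}. (ind k a - ind k b) * (ind k c - ind k e)) = dd a c - dd a e - dd b c + dd b e"
proof -
  have "(\<Sum>k\<in>{1..d}. (ind k a - ind k b) * (ind k c - ind k e)) =
     (\<Sum>k\<in>{1..d}. ind k a * ind k c) - (\<Sum>k\<in>{1..d}. ind k a * ind k e) - (\<Sum>k\<in>{1..d}. ind k b * ind k c) + (\<Sum>k\<in>{1..d}. ind k b * ind k e)"
    by (simp add: algebra_simps sum.distrib sum_subtractf)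
  thus ?thesis unfolding sum_ind2 .
qed

lemma SSee: "i < n \<Longrightarrow> j < n \<Longrightarrow> a < n \<Longrightarrow> b < n \<Longrightarrow>
   (\<Sum>k\<in>{1..d}. ee k i j * ee k a b) = 4 * (dd (bof j) (bof b) - dd (bof j) (bof a) - dd (bof i) (bof b) + dd (bof i) (bof a))"
proof -
  assume h: "i < n" "j < n" "a < n" "b < n"
  have "(\<Sum>k\<in>{1..d}. ee k i j * ee k a b) = (\<Sum>k\<in>{1..d}. 4 * ((ind k (bof j) - ind k (bof i)) * (ind k (bof b) - ind k (bof a))))"
    by (rule sum.cong) (auto simp: ee_ind h algebra_simps)
  also have "\<dots> = 4 * (\<Sum>k\<in>{1..d}. (ind k (bof j) - ind k (bof i)) * (ind k (bof b) - ind k (bof a)))"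
    by (simp add: sum_distrib_left)
  also have "\<dots> = 4 * (dd (bof j) (bof b) - dd (bof j) (bof a) - dd (bof i) (bof b) + dd (bof i) (bof a))"
    by (simp only: SS)
  finally show ?thesis .
qed

definition Am :: "Defs.mat \<Rightarrow> nat \<Rightarrow> Defs.mat" where "Am X k = mmul n X (J k) - mmul n (J k) X"
definition Zm :: "Defs.mat \<Rightarrow> Defs.mat \<Rightarrow> Defs.mat \<Rightarrow> nat \<Rightarrow> Defs.mat" where
  "Zm L X Xp k = mmul n L (Am X k) + Am Xp k + mmul n (Am X k) (mtr L)"
definition GG :: "Defs.mat \<Rightarrow> Defs.mat \<Rightarrow> Defs.mat \<Rightarrow> Defs.mat" where
  "GG L X Xp i j = (\<Sum>k\<in>{1..d}. Zm L X Xp k i j * ee k i j)"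

lemma Am_entry: "r < n \<Longrightarrow> j < n \<Longrightarrow> Am X k r j = X r j * ee k r j"
  by (simp add: Am_def mmul_J_left mmul_J_right ee_def algebra_simps)

lemma GG_expand:
  assumes ij: "i < n" "j < n"
  shows "GG L X Xp i j = (\<Sum>r<n. L i r * X r j * (\<Sum>k\<in>{1..d}. ee k r j * ee k i j))
      + Xp i j * (\<Sum>k\<in>{1..d}. ee k i j * ee k i j)
      + (\<Sum>r<n. X i r * L j r * (\<Sum>k\<in>{1..d}. ee k i r * ee k i j))"
proof -
  have Z: "Zm L X Xp k i j = (\<Sum>r<n. L i r * X r j * ee k r j) + Xp i j * ee k i j + (\<Sum>r<n. X i r * L j r * ee k i r)" for k
  proof -
    have a: "(\<Sum>r<n. L i r * Am X k r j) = (\<Sum>r<n. L i r * X r j * ee k r j)"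
      by (rule sum.cong) (auto simp: Am_entry ij mult.assoc)
    have b: "(\<Sum>r<n. Am X k i r * L j r) = (\<Sum>r<n. X i r * L j r * ee k i r)"
      by (rule sum.cong) (auto simp: Am_entry ij mult.assoc mult.commute mult.left_commute)
    show ?thesis unfolding Zm_def mmul_def mtr_def plus_fun_apply a b Am_entry[OF ij] by simp
  qed
  have "GG L X Xp i j = (\<Sum>k\<in>{1..d}. (\<Sum>r<n. L i r * X r j * ee k r j * ee k i j) + Xp i j * (ee k i j * ee k i j) + (\<Sum>r<n. X i r * L j r * ee k i r * ee k i j))"
    unfolding GG_def Z by (simp add: sum_distrib_left sum_distrib_right mult_ac distrib_left distrib_right)
  also have "\<dots> = (\<Sum>k\<in>{1..d}. \<Sum>r<n. L i r * X r j * ee k r j * ee k i j) + Xp i j * (\<Sum>k\<in>{1..d}. ee k i j * ee k i j) + (\<Sum>k\<in>{1..d}. \<Sum>r<n. X i r * L j r * ee k i r * ee k i j)"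
    by (simp add: sum.distrib sum_distrib_left)
  also have "(\<Sum>k\<in>{1..d}. \<Sum>r<n. L i r * X r j * ee k r j * ee k i j) = (\<Sum>r<n. \<Sum>k\<in>{1..d}. L i r * X r j * ee k r j * ee k i j)"
    by (rule sum.swap)
  also have "(\<Sum>k\<in>{1..d}. \<Sum>r<n. X i r * L j r * ee k i r * ee k i j) = (\<Sum>r<n. \<Sum>k\<in>{1..d}. X i r * L j r * ee k i r * ee k i j)"
    by (rule sum.swap)
  finally show ?thesis by (simp add: sum_distrib_left mult.assoc)
qed

definition blkzero :: "Defs.mat \<Rightarrow> bool" where
  "blkzero M \<longleftrightarrow> (\<forall>i<n. \<forall>j<n. bof i = bof j \<longrightarrow> M i j = 0)"
definition skw :: "Defs.mat \<Rightarrow> bool" where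
  "skw M \<longleftrightarrow> (\<forall>i<n. \<forall>j<n. M i j = - M j i)"

lemma bof_le: "i < n \<Longrightarrow> bof i \<le> d + 1" "i < n \<Longrightarrow> 1 \<le> bof i" using bof_props(1) by auto

lemma GG_formula:
  assumes ij: "i < n" "j < n" "bof i \<noteq> bof j" and bz: "blkzero X" "blkzero L"
  shows "GG L X Xp i j = 4 * dd (bof j) (bof j) * (\<Sum>r<n. L i r * X r j)
      + 4 * (dd (bof i) (bof i) + dd (bof j) (bof j)) * Xp i j
      + 4 * dd (bof i) (bof i) * (\<Sum>r<n. X i r * L j r)"
proof -
  have bi: "bof i \<le> d+1" "1 \<le> bof i" "bof j \<le> d+1" "1 \<le> bof j" using bof_le ij by auto
  have s1: "L i r * X r j * (\<Sum>k\<in>{1..d}. ee k r j * ee k i j) = 4 * dd (bof j) (bof j) * (L i r * X r j)" if r: "r < n" for r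
  proof -
    have e: "(\<Sum>k\<in>{1..d}. ee k r j * ee k i j) = 4 * (dd (bof j) (bof j) - dd (bof j) (bof i) - dd (bof r) (bof j) + dd (bof r) (bof i))"
      using SSee r ij by simp
    show ?thesis
    proof (cases "bof r = bof i \<or> bof r = bof j")
      case True
      hence z: "L i r * X r j = 0" using bz r ij unfolding blkzero_def by auto
      show ?thesis unfolding z by simp
    next
      case False thus ?thesis using ij(3) unfolding e by (simp add: dd_def)
    qed
  qed
  have s3: "X i r * L j r * (\<Sum>k\<in>{1..d}. ee k i r * ee k i j) = 4 * dd (bof i) (bof i) * (X i r * L j r)" if r: "r < n" for r
  proof -
    have e: "(\<Sum>k\<in>{1..d}. ee k i r * ee k i j) = 4 * (dd (bof r) (bof j) - dd (bof r) (bof i) - dd (bof i) (bof j) + dd (bof i) (bof i))"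
      using SSee r ij by simp
    show ?thesis
    proof (cases "bof r = bof i \<or> bof r = bof j")
      case True
      hence z: "X i r * L j r = 0" using bz r ij unfolding blkzero_def by auto
      show ?thesis unfolding z by simp
    next
      case False thus ?thesis using ij(3) unfolding e by (simp add: dd_def)
    qed
  qed
  have s2: "(\<Sum>k\<in>{1..d}. ee k i j * ee k i j) = 4 * (dd (bof i) (bof i) + dd (bof j) (bof j))"
    using SSee[of i j i j] ij by (simp add: dd_def)
  have "(\<Sum>r<n. L i r * X r j * (\<Sum>k\<in>{1..d}. ee k r j * ee k i j)) = (\<Sum>r<n. 4 * dd (bof j) (bof j) * (L i r * X r j))"
    by (rule sum.cong[OF refl]) (rule s1, simp)
  also have "\<dots> = 4 * dd (bof j) (bof j) * (\<Sum>r<n. L i r * X r j)" by (simp add: sum_distrib_left)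
  finally have t1: "(\<Sum>r<n. L i r * X r j * (\<Sum>k\<in>{1..d}. ee k r j * ee k i j)) = 4 * dd (bof j) (bof j) * (\<Sum>r<n. L i r * X r j)" .
  have "(\<Sum>r<n. X i r * L j r * (\<Sum>k\<in>{1..d}. ee k i r * ee k i j)) = (\<Sum>r<n. 4 * dd (bof i) (bof i) * (X i r * L j r))"
    by (rule sum.cong[OF refl]) (rule s3, simp)
  also have "\<dots> = 4 * dd (bof i) (bof i) * (\<Sum>r<n. X i r * L j r)" by (simp add: sum_distrib_left)
  finally have t3: "(\<Sum>r<n. X i r * L j r * (\<Sum>k\<in>{1..d}. ee k i r * ee k i j)) = 4 * dd (bof i) (bof i) * (\<Sum>r<n. X i r * L j r)" .
  show ?thesis unfolding GG_expand[OF ij(1,2)] t1 t3 s2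
    by (simp add: algebra_simps)
qed

lemma GG_same:
  assumes ij: "i < n" "j < n" "bof i = bof j"
  shows "GG L X Xp i j = 0"
proof -
  have "ee k i j = 0" if "k \<in> {1..d}" for k using ee_ind[OF ij(1,2) that] ij(3) by simp
  thus ?thesis unfolding GG_def by simp
qed

end

context blocks
begin

definition RR :: "Defs.mat \<Rightarrow> Defs.mat \<Rightarrow> nat \<Rightarrow> nat \<Rightarrow> real" where
  "RR L X i j = (if (\<exists>p\<in>{1..d+1}. i \<in> B p \<and> j \<in> B p) then 0
                    else mmul n X L i j - mmul n L X i j)
                   + (if i < ns d \<and> ns d \<le> j then
                        (\<Sum>r<ns d. X i r * L r j + L i r * X r j)
                      else if ns d \<le> i \<and> j < ns d then
                        - (\<Sum>r<ns d. X j r * L r i + L j r * X r i)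
                      else 0)"

lemma sum_restrict_N: "(\<And>r. ns d \<le> r \<Longrightarrow> r < n \<Longrightarrow> h r = 0) \<Longrightarrow> (\<Sum>r<ns d. h r) = (\<Sum>r<n. h r)"
  by (rule sum.mono_neutral_left) (use ns_last in auto)

lemma dd_self: "i < n \<Longrightarrow> dd (bof i) (bof i) = (if bof i \<le> d then 1 else 0)"
  using bof_le[of i] by (auto simp: dd_def)

lemma core_sym:
  assumes ij: "i < n" "j < n" "bof i \<noteq> bof j"
    and bz: "blkzero X" "blkzero L" and sk: "skw X" "skw L" "skw Xp"
  shows "GG L X Xp i j = GG L X Xp j i \<longleftrightarrow> 2 * Xp i j = RR L X i j"
proof -
  define a where "a = (\<Sum>r<n. L i r * X r j)"
  define b where "b = (\<Sum>r<n. X i r * L r j)"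
  have ji: "j < n" "i < n" "bof j \<noteq> bof i" using ij by auto
  have Lj: "L j r = - L r j" if "r < n" for r using sk(2) ij that unfolding skw_def by blast
  have Xj: "X j r = - X r j" if "r < n" for r using sk(1) ij that unfolding skw_def by blast
  have Xi: "X r i = - X i r" if "r < n" for r using sk(1) ij that unfolding skw_def by blast
  have Li: "L r i = - L i r" if "r < n" for r using sk(2) ij that unfolding skw_def by blast
  have e1: "(\<Sum>r<n. X i r * L j r) = - b" unfolding b_def sum_negf[symmetric]
    by (rule sum.cong) (simp_all add: Lj)
  have e2: "(\<Sum>r<n. L j r * X r i) = b" unfolding b_def
    by (rule sum.cong) (simp_all add: Lj Xi)
  have e3: "(\<Sum>r<n. X j r * L i r) = - a" unfolding a_def sum_negf[symmetric]
    by (rule sum.cong) (simp_all add: Xj)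
  have xp: "Xp j i = - Xp i j" using sk(3) ij unfolding skw_def by blast
  have G1: "GG L X Xp i j = 4 * dd (bof j) (bof j) * a + 4 * (dd (bof i) (bof i) + dd (bof j) (bof j)) * Xp i j
      - 4 * dd (bof i) (bof i) * b"
    using GG_formula[OF ij bz] e1 by (simp add: a_def)
  have G2: "GG L X Xp j i = 4 * dd (bof i) (bof i) * b - 4 * (dd (bof i) (bof i) + dd (bof j) (bof j)) * Xp i j
      - 4 * dd (bof j) (bof j) * a"
    unfolding GG_formula[OF ji bz, of Xp] e2 e3 xp by (simp add: algebra_simps)
  have nsb: "\<not> (\<exists>p\<in>{1..d+1}. i \<in> B p \<and> j \<in> B p)" using same_blk_iff ij by blast
  have C: "mmul n X L i j - mmul n L X i j = b - a" by (simp add: mmul_def a_def b_def)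
  have bi: "1 \<le> bof i" "bof i \<le> d+1" "1 \<le> bof j" "bof j \<le> d+1" using bof_le ij by auto
  consider "bof i \<le> d" "bof j \<le> d" | "bof i \<le> d" "bof j = d+1" | "bof i = d+1" "bof j \<le> d"
    using bi ij(3) by linarith
  thus ?thesis
  proof cases
    case 1
    hence "i < ns d" "j < ns d" using lt_N_iff ij by auto
    hence r: "RR L X i j = b - a" unfolding RR_def if_not_P[OF nsb] C by simp
    moreover have d12: "dd (bof i) (bof i) = 1" "dd (bof j) (bof j) = 1" using 1 bi by (auto simp: dd_def)
    show ?thesis unfolding G1 G2 r d12 by (simp; linarith)
  next
    case 2
    hence N: "i < ns d" "ns d \<le> j" using lt_N_iff[OF ij(1)] lt_N_iff[OF ij(2)] by auto
    have "(\<Sum>r<ns d. X i r * L r j + L i r * X r j) = (\<Sum>r<n. X i r * L r j + L i r * X r j)"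
    proof (rule sum_restrict_N)
      fix r assume r: "ns d \<le> r" "r < n"
      hence "bof r = bof j" using lt_N_iff 2 bof_le[of r] by fastforce
      thus "X i r * L r j + L i r * X r j = 0" using bz r ij unfolding blkzero_def by simp
    qed
    also have "\<dots> = b + a" by (simp add: sum.distrib a_def b_def)
    finally have r: "RR L X i j = b - a + (b + a)" unfolding RR_def if_not_P[OF nsb] C using N by simp
    moreover have d12: "dd (bof i) (bof i) = 1" "dd (bof j) (bof j) = 0" using 2 bi by (auto simp: dd_def)
    show ?thesis unfolding G1 G2 r d12 by (simp; linarith)
  next
    case 3
    hence N: "ns d \<le> i" "j < ns d" using lt_N_iff[OF ij(1)] lt_N_iff[OF ij(2)] by auto
    have "(\<Sum>r<ns d. X j r * L r i + L j r * X r i) = (\<Sum>r<n. X j r * L r i + L j r * X r i)"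
    proof (rule sum_restrict_N)
      fix r assume r: "ns d \<le> r" "r < n"
      hence "bof r = bof i" using lt_N_iff 3 bof_le[of r] by fastforce
      thus "X j r * L r i + L j r * X r i = 0" using bz r ij unfolding blkzero_def by simp
    qed
    also have "\<dots> = (\<Sum>r<n. L i r * X r j) + (\<Sum>r<n. X i r * L r j)"
      unfolding sum.distrib[symmetric]
      by (rule sum.cong) (simp_all add: Xj Li Lj Xi)
    finally have r: "RR L X i j = b - a - (a + b)" unfolding RR_def if_not_P[OF nsb] C using N by (simp add: a_def b_def)
    moreover have d12: "dd (bof i) (bof i) = 0" "dd (bof j) (bof j) = 1" using 3 bi by (auto simp: dd_def)
    show ?thesis unfolding G1 G2 r d12 by (simp; linarith)
  qed
qed

end

definition trc :: "nat \<Rightarrow> Defs.mat \<Rightarrow> real" where "trc n M = (\<Sum>i<n. M i i)"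

lemma inner_trc: "(\<Sum>i<n. \<Sum>j<n. A i j * B i j) = trc n (mmul n A (mtr B))"
  by (simp add: trc_def mmul_def mtr_def)

lemma trc_meq: "meq n A B \<Longrightarrow> trc n A = trc n B"
  by (simp add: trc_def meq_def)

lemma trc_comm: "trc n (mmul n A B) = trc n (mmul n B A)"
  unfolding trc_def mmul_def by (subst sum.swap) (simp add: mult.commute)

lemma frob_conj:
  assumes o: "Defs.orthogonal_mat n U"
  shows "(\<Sum>i<n. \<Sum>j<n. P i j * Q i j) =
    (\<Sum>i<n. \<Sum>j<n. mmul n (mmul n (mtr U) P) U i j * mmul n (mmul n (mtr U) Q) U i j)"
proof -
  have "(\<Sum>i<n. \<Sum>j<n. mmul n (mmul n (mtr U) P) U i j * mmul n (mmul n (mtr U) Q) U i j)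
      = trc n (mmul n (mmul n (mmul n (mtr U) P) U) (mtr (mmul n (mmul n (mtr U) Q) U)))"
    by (rule inner_trc)
  also have "mmul n (mmul n (mmul n (mtr U) P) U) (mtr (mmul n (mmul n (mtr U) Q) U))
      = mmul n (mtr U) (mmul n P (mmul n (mmul n U (mtr U)) (mmul n (mtr Q) U)))"
    by (simp add: mtr_mmul mmul_assoc)
  also have "trc n \<dots> = trc n (mmul n (mmul n P (mmul n (mmul n U (mtr U)) (mmul n (mtr Q) U))) (mtr U))"
    by (rule trc_comm)
  also have "mmul n (mmul n P (mmul n (mmul n U (mtr U)) (mmul n (mtr Q) U))) (mtr U)
      = mmul n P (mmul n (mmul n U (mtr U)) (mmul n (mtr Q) (mmul n U (mtr U))))"
    by (simp add: mmul_assoc)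
  also have "trc n \<dots> = trc n (mmul n P (mmul n Idm (mmul n (mtr Q) Idm)))"
    by (intro trc_meq mmul_cong meq_refl orth_right_meq[OF o])
  also have "trc n (mmul n P (mmul n Idm (mmul n (mtr Q) Idm))) = trc n (mmul n P (mtr Q))"
    by (intro trc_meq mmul_cong meq_refl meq_trans[OF meq_Idm_left meq_Idm_right])
  finally show ?thesis by (simp add: inner_trc)
qed

lemma conj_deriv:
  assumes "mat_deriv n V V1 t" "mat_deriv n A A1 t"
  shows "mat_deriv n (\<lambda>s. mmul n (mmul n (V s) (A s)) (mtr (V s)))
     (mmul n (mmul n V1 (A t) + mmul n (V t) A1) (mtr (V t)) + mmul n (mmul n (V t) (A t)) (mtr V1)) t"
  by (rule mat_deriv_mmul[OF mat_deriv_mmul[OF assms] mat_deriv_mtr[OF assms(1)]])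

lemma frame_D:
  assumes o: "Defs.orthogonal_mat n U"
  shows "meq n (mmul n (mmul n (mtr U) (mmul n (mmul n V1 A + mmul n U A1) (mtr U) + mmul n (mmul n U A) (mtr V1))) U)
     (mmul n (mmul n (mtr U) V1) A + A1 + mmul n A (mtr (mmul n (mtr U) V1)))"
proof -
  have e1: "mmul n (mmul n (mtr U) (mmul n (mmul n V1 A + mmul n U A1) (mtr U))) U
     = mmul n (mtr U) (mmul n (mmul n V1 A + mmul n U A1) (mmul n (mtr U) U))"
    by (simp add: mmul_assoc)
  have m1: "meq n (mmul n (mtr U) (mmul n (mmul n V1 A + mmul n U A1) (mmul n (mtr U) U)))
      (mmul n (mtr U) (mmul n V1 A + mmul n U A1))"
    by (intro mmul_cong meq_refl orth_cancel_right[OF o])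
  have e2: "mmul n (mtr U) (mmul n V1 A + mmul n U A1) = mmul n (mmul n (mtr U) V1) A + mmul n (mtr U) (mmul n U A1)"
    by (simp add: mmul_add_right mmul_assoc)
  have m2: "meq n (mmul n (mmul n (mtr U) V1) A + mmul n (mtr U) (mmul n U A1)) (mmul n (mmul n (mtr U) V1) A + A1)"
    by (intro meq_add meq_refl orth_cancel_left[OF o])
  have e3: "mmul n (mmul n (mtr U) (mmul n (mmul n U A) (mtr V1))) U = mmul n (mtr U) (mmul n U (mmul n A (mmul n (mtr V1) U)))"
    by (simp add: mmul_assoc)
  have m3: "meq n (mmul n (mtr U) (mmul n U (mmul n A (mmul n (mtr V1) U)))) (mmul n A (mtr (mmul n (mtr U) V1)))"
    using orth_cancel_left[OF o, of "mmul n A (mmul n (mtr V1) U)"] by (simp add: mtr_mmul)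
  have "mmul n (mmul n (mtr U) (mmul n (mmul n V1 A + mmul n U A1) (mtr U) + mmul n (mmul n U A) (mtr V1))) U
     = mmul n (mmul n (mtr U) (mmul n (mmul n V1 A + mmul n U A1) (mtr U))) U + mmul n (mmul n (mtr U) (mmul n (mmul n U A) (mtr V1))) U"
    by (simp add: mmul_add_right mmul_add_left)
  also have "meq n \<dots> ((mmul n (mmul n (mtr U) V1) A + A1) + mmul n A (mtr (mmul n (mtr U) V1)))"
    unfolding e1 e3 by (intro meq_add meq_trans[OF m1] m3) (unfold e2, rule m2)
  finally show ?thesis .
qed

definition rot :: "nat \<Rightarrow> nat \<Rightarrow> real \<Rightarrow> Defs.mat" where
  "rot a b s = (\<lambda>i j. if i = j then (if i = a \<or> i = b then cos s else 1)
     else if i = a \<and> j = b then sin s else if i = b \<and> j = a then - sin s else 0)"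
definition rot' :: "nat \<Rightarrow> nat \<Rightarrow> real \<Rightarrow> Defs.mat" where
  "rot' a b s = (\<lambda>i j. if i = j then (if i = a \<or> i = b then - sin s else 0)
     else if i = a \<and> j = b then cos s else if i = b \<and> j = a then - cos s else 0)"
definition Om :: "nat \<Rightarrow> nat \<Rightarrow> Defs.mat" where
  "Om a b = (\<lambda>i j. if i = a \<and> j = b then 1 else if i = b \<and> j = a then -1 else 0)"

lemma rot_deriv: "mat_deriv n (rot a b) (rot' a b s) s"
  unfolding mat_deriv_def
proof (intro allI impI)
  fix i j :: nat
  have c: "((\<lambda>s. cos s) has_real_derivative - sin s) (at s)" by (rule DERIV_cos)
  have sn: "((\<lambda>s. sin s) has_real_derivative cos s) (at s)" by (rule DERIV_sin)
  have msn: "((\<lambda>s. - sin s) has_real_derivative - cos s) (at s)" by (rule DERIV_minus[OF sn])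
  have k: "((\<lambda>s. (k::real)) has_real_derivative 0) (at s)" for k by (rule DERIV_const)
  show "((\<lambda>s. rot a b s i j) has_real_derivative rot' a b s i j) (at s)"
  proof -
    consider (d1) "i = j" "i = a \<or> i = b" | (d2) "i = j" "\<not> (i = a \<or> i = b)"
      | (ab) "i \<noteq> j" "i = a \<and> j = b" | (ba) "i \<noteq> j" "\<not> (i = a \<and> j = b)" "i = b \<and> j = a"
      | (oo) "i \<noteq> j" "\<not> (i = a \<and> j = b)" "\<not> (i = b \<and> j = a)" by blast
    thus ?thesis
    proof cases
      case d1
      hence "(\<lambda>s. rot a b s i j) = (\<lambda>s. cos s)" "rot' a b s i j = - sin s" by (simp_all add: rot_def rot'_def)
      thus ?thesis using c by simp
    next
      case d2
      hence "(\<lambda>s. rot a b s i j) = (\<lambda>s. 1)" "rot' a b s i j = 0" by (simp_all add: rot_def rot'_def)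
      thus ?thesis using k by simp
    next
      case ab
      hence "(\<lambda>s. rot a b s i j) = (\<lambda>s. sin s)" "rot' a b s i j = cos s" by (simp_all add: rot_def rot'_def)
      thus ?thesis using sn by simp
    next
      case ba
      hence "(\<lambda>s. rot a b s i j) = (\<lambda>s. - sin s)" "rot' a b s i j = - cos s" by (simp_all add: rot_def rot'_def)
      thus ?thesis using msn by simp
    next
      case oo
      hence "(\<lambda>s. rot a b s i j) = (\<lambda>s. 0)" "rot' a b s i j = 0" by (auto simp: rot_def rot'_def fun_eq_iff)
      thus ?thesis using k by simp
    qed
  qed
qed

lemma rot0: "rot a b 0 = Idm" by (simp add: rot_def Idm_def fun_eq_iff)
lemma rot'0: "a \<noteq> b \<Longrightarrow> rot' a b 0 = Om a b" by (simp add: rot'_def Om_def fun_eq_iff)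
lemma mtr_Om: assumes "a \<noteq> b" shows "mtr (Om a b) = - Om a b"
proof (intro ext)
  fix i j show "mtr (Om a b) i j = (- Om a b) i j" using assms by (simp add: mtr_def Om_def)
qed

lemma rot_orth:
  assumes ab: "a < n" "b < n" "a \<noteq> b"
  shows "Defs.orthogonal_mat n (rot a b s)"
  unfolding Defs.orthogonal_mat_def
proof (intro allI impI)
  fix i j assume ij: "i < n" "j < n"
  let ?f = "\<lambda>r. rot a b s r i * rot a b s r j"
  have "mmul n (mtr (rot a b s)) (rot a b s) i j = (\<Sum>r<n. ?f r)" by (simp add: mmul_def mtr_def)
  also have "\<dots> = ?f a + (\<Sum>r\<in>{..<n} - {a}. ?f r)" using ab by (subst sum.remove[of _ a]) auto
  also have "(\<Sum>r\<in>{..<n} - {a}. ?f r) = ?f b + (\<Sum>r\<in>{..<n} - {a} - {b}. ?f r)" using ab by (subst sum.remove[of _ b]) auto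
  also have "(\<Sum>r\<in>{..<n} - {a} - {b}. ?f r) = (\<Sum>r\<in>{..<n} - {a} - {b}. if r = i then (if i = j then 1 else 0) else 0)"
    by (rule sum.cong) (auto simp: rot_def)
  also have "\<dots> = (if i \<noteq> a \<and> i \<noteq> b \<and> i = j then 1 else 0)" using ij by (simp add: sum.delta')
  finally have e: "mmul n (mtr (rot a b s)) (rot a b s) i j = ?f a + (?f b + (if i \<noteq> a \<and> i \<noteq> b \<and> i = j then 1 else 0))" .
  have sc: "sin s * sin s + cos s * cos s = 1" "cos s * cos s + sin s * sin s = 1" using sin_cos_squared_add[of s] by (simp_all add: power2_eq_square)
  show "mmul n (mtr (rot a b s)) (rot a b s) i j = (if i = j then 1 else 0)"
  proof -
    have v: "rot a b s a a = cos s" "rot a b s a b = sin s" "rot a b s b a = - sin s" "rot a b s b b = cos s"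
      using ab(3) by (auto simp: rot_def)
    have w: "x \<noteq> a \<Longrightarrow> x \<noteq> b \<Longrightarrow> rot a b s a x = 0" "x \<noteq> a \<Longrightarrow> x \<noteq> b \<Longrightarrow> rot a b s b x = 0" for x
      using ab(3) by (auto simp: rot_def)
    have c_aa: "i = a \<Longrightarrow> j = a \<Longrightarrow> ?thesis" unfolding e using ab(3) by (simp add: v w sc mult.commute)
    have c_ab: "i = a \<Longrightarrow> j = b \<Longrightarrow> ?thesis" unfolding e using ab(3) by (simp add: v w sc mult.commute)
    have c_ao: "i = a \<Longrightarrow> j \<noteq> a \<Longrightarrow> j \<noteq> b \<Longrightarrow> ?thesis" unfolding e using ab(3) by (simp add: v w sc mult.commute)
    have c_ba: "i = b \<Longrightarrow> j = a \<Longrightarrow> ?thesis" unfolding e using ab(3) by (simp add: v w sc mult.commute)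
    have c_bb: "i = b \<Longrightarrow> j = b \<Longrightarrow> ?thesis" unfolding e using ab(3) by (simp add: v w sc mult.commute)
    have c_bo: "i = b \<Longrightarrow> j \<noteq> a \<Longrightarrow> j \<noteq> b \<Longrightarrow> ?thesis" unfolding e using ab(3) by (simp add: v w sc mult.commute)
    have c_oa: "i \<noteq> a \<Longrightarrow> i \<noteq> b \<Longrightarrow> j = a \<Longrightarrow> ?thesis" unfolding e using ab(3) by (simp add: v w sc mult.commute)
    have c_ob: "i \<noteq> a \<Longrightarrow> i \<noteq> b \<Longrightarrow> j = b \<Longrightarrow> ?thesis" unfolding e using ab(3) by (simp add: v w sc mult.commute)
    have c_oo: "i \<noteq> a \<Longrightarrow> i \<noteq> b \<Longrightarrow> j \<noteq> a \<Longrightarrow> j \<noteq> b \<Longrightarrow> ?thesis" unfolding e using ab(3) by (simp add: v w sc mult.commute)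
    consider (ia) "i = a" | (ib) "i = b" | (io) "i \<noteq> a" "i \<noteq> b" by blast
    thus ?thesis
    proof cases
      case ia
      consider "j = a" | "j = b" | "j \<noteq> a" "j \<noteq> b" by blast
      thus ?thesis
      proof cases
        case 1 thus ?thesis by (rule c_aa[OF ia])
      next
        case 2 thus ?thesis by (rule c_ab[OF ia])
      next
        case 3 thus ?thesis by (rule c_ao[OF ia])
      qed
    next
      case ib
      consider "j = a" | "j = b" | "j \<noteq> a" "j \<noteq> b" by blast
      thus ?thesis
      proof cases
        case 1 thus ?thesis by (rule c_ba[OF ib])
      next
        case 2 thus ?thesis by (rule c_bb[OF ib])
      next
        case 3 thus ?thesis by (rule c_bo[OF ib])
      qed
    next
      case io
      consider "j = a" | "j = b" | "j \<noteq> a" "j \<noteq> b" by blast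
      thus ?thesis
      proof cases
        case 1 thus ?thesis by (rule c_oa[OF io])
      next
        case 2 thus ?thesis by (rule c_ob[OF io])
      next
        case 3 thus ?thesis by (rule c_oo[OF io])
      qed
    qed
  qed
qed

lemma sum_Om: "a < n \<Longrightarrow> b < n \<Longrightarrow> a \<noteq> b \<Longrightarrow> (\<Sum>i<n. \<Sum>j<n. Om a b i j * f i j) = f a b - f b a"
proof -
  assume ab: "a < n" "b < n" "a \<noteq> b"
  have inner: "(\<Sum>j<n. Om a b i j * f i j) = (if i = a then f a b else 0) - (if i = b then f b a else 0)" for i
  proof -
    have "(\<Sum>j<n. Om a b i j * f i j) = (\<Sum>j<n. (if j = b then (if i = a then f a b else 0) else 0) - (if j = a then (if i = b then f b a else 0) else 0))"
      by (rule sum.cong) (use ab in \<open>auto simp: Om_def\<close>)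
    also have "\<dots> = (if i = a then f a b else 0) - (if i = b then f b a else 0)"
      using ab by (simp add: sum_subtractf sum.delta')
    finally show ?thesis .
  qed
  show ?thesis unfolding inner using ab by (simp add: sum_subtractf sum.delta')
qed

context blocks
begin

lemma frob_formula:
  assumes o: "Defs.orthogonal_mat n U"
    and Dk: "\<forall>k\<in>{1..d}. meq n (mmul n (mmul n (mtr U) (D k)) U) (Zm L X Xp k)"
    and Wk: "\<forall>k\<in>{1..d}. meq n (mmul n (mmul n (mtr U) (W k)) U) (\<lambda>i j. Om' i j * ee k i j)"
  shows "frob n d D W = (\<Sum>i<n. \<Sum>j<n. Om' i j * GG L X Xp i j)"
proof -
  have "frob n d D W = (\<Sum>k\<in>{1..d}. \<Sum>i<n. \<Sum>j<n. Zm L X Xp k i j * (Om' i j * ee k i j))"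
    unfolding frob_def
  proof (rule sum.cong[OF refl])
    fix k assume k: "k \<in> {1..d}"
    show "(\<Sum>i<n. \<Sum>j<n. D k i j * W k i j) = (\<Sum>i<n. \<Sum>j<n. Zm L X Xp k i j * (Om' i j * ee k i j))"
      unfolding frob_conj[OF o, of "D k" "W k"]
      by (intro sum.cong refl) (simp add: meqD[OF Dk[rule_format, OF k]] meqD[OF Wk[rule_format, OF k]])
  qed
  also have "\<dots> = (\<Sum>i<n. \<Sum>k\<in>{1..d}. \<Sum>j<n. Zm L X Xp k i j * (Om' i j * ee k i j))"
    by (rule sum.swap)
  also have "\<dots> = (\<Sum>i<n. \<Sum>j<n. \<Sum>k\<in>{1..d}. Zm L X Xp k i j * (Om' i j * ee k i j))"
    by (intro sum.cong refl sum.swap)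
  also have "\<dots> = (\<Sum>i<n. \<Sum>j<n. Om' i j * GG L X Xp i j)"
    unfolding GG_def by (simp add: sum_distrib_left mult_ac)
  finally show ?thesis .
qed

lemma givens_tangent:
  assumes o: "Defs.orthogonal_mat n U" and ab: "a < n" "b < n" "a \<noteq> b"
  shows "\<exists>W\<in>flag_tangent ns d n (\<lambda>k. mmul n (mmul n U (J k)) (mtr U)).
           \<forall>k\<in>{1..d}. meq n (mmul n (mmul n (mtr U) (W k)) U) (\<lambda>i j. Om a b i j * ee k i j)"
proof -
  define M where "M s = mmul n U (rot a b s)" for s
  define M' where "M' s = mmul n 0 (rot a b s) + mmul n U (rot' a b s)" for s
  define \<gamma> where "\<gamma> s k = mmul n (mmul n (M s) (J k)) (mtr (M s))" for s k
  define \<Gamma> where "\<Gamma> s k = mmul n (mmul n (M' s) (J k) + mmul n (M s) 0) (mtr (M s)) + mmul n (mmul n (M s) (J k)) (mtr (M' s))" for s k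
  have Md: "mat_deriv n M (M' s) s" for s
    unfolding M_def M'_def by (rule mat_deriv_mmul[OF mat_deriv_const rot_deriv])
  have Mo: "Defs.orthogonal_mat n (M s)" for s
  proof -
    have "mmul n (mtr (M s)) (M s) = mmul n (mtr (rot a b s)) (mmul n (mtr U) (mmul n U (rot a b s)))"
      by (simp add: M_def mtr_mmul mmul_assoc)
    also have "meq n \<dots> (mmul n (mtr (rot a b s)) (rot a b s))"
      by (intro mmul_cong meq_refl orth_cancel_left[OF o])
    finally show ?thesis using rot_orth[OF ab, of s] unfolding Defs.orthogonal_mat_def meq_def by auto
  qed
  have f1: "\<forall>s. \<gamma> s \<in> Flag ns d n" unfolding Flag_def \<gamma>_def tup_eq_def using Mo by blast
  have f2: "\<forall>s. tup_deriv n d \<gamma> (\<Gamma> s) s" unfolding tup_deriv_iff \<gamma>_def \<Gamma>_def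
    using conj_deriv[OF Md mat_deriv_const] by blast
  have "meq n (M 0) U" unfolding M_def rot0 by (rule meq_Idm_right)
  hence f3: "tup_eq n d (\<gamma> 0) (\<lambda>k. mmul n (mmul n U (J k)) (mtr U))"
    unfolding tup_eq_def \<gamma>_def using mmul_cong[OF mmul_cong[OF _ meq_refl] meq_mtr] unfolding meq_def by blast
  have f4: "tup_eq n d (\<Gamma> 0) (\<Gamma> 0)" by (simp add: tup_eq_def)
  have "\<Gamma> 0 \<in> flag_tangent ns d n (\<lambda>k. mmul n (mmul n U (J k)) (mtr U))"
    unfolding flag_tangent_def using f1 f2 f3 f4 by blast
  moreover have "meq n (mmul n (mmul n (mtr U) (\<Gamma> 0 k)) U) (\<lambda>i j. Om a b i j * ee k i j)" for k
  proof -
    have m0: "meq n (M 0) U" unfolding M_def rot0 by (rule meq_Idm_right)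
    have m0': "M' 0 = mmul n U (Om a b)" unfolding M'_def rot'0[OF ab(3)] by simp
    have "meq n (\<Gamma> 0 k) (mmul n (mmul n (mmul n U (Om a b)) (J k) + mmul n U 0) (mtr U) + mmul n (mmul n U (J k)) (mtr (mmul n U (Om a b))))"
      unfolding \<Gamma>_def m0' by (intro meq_add mmul_cong meq_refl m0 meq_mtr)
    hence "meq n (mmul n (mmul n (mtr U) (\<Gamma> 0 k)) U)
       (mmul n (mmul n (mtr U) (mmul n (mmul n (mmul n U (Om a b)) (J k) + mmul n U 0) (mtr U) + mmul n (mmul n U (J k)) (mtr (mmul n U (Om a b))))) U)"
      by (intro mmul_cong meq_refl)
    also have "meq n \<dots> (mmul n (mmul n (mtr U) (mmul n U (Om a b))) (J k) + 0 + mmul n (J k) (mtr (mmul n (mtr U) (mmul n U (Om a b)))))"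
      by (rule frame_D[OF o])
    also have "meq n \<dots> (mmul n (Om a b) (J k) + 0 + mmul n (J k) (mtr (Om a b)))"
      by (intro meq_add mmul_cong meq_refl meq_mtr orth_cancel_left[OF o])
    also have "meq n \<dots> (\<lambda>i j. Om a b i j * ee k i j)"
      unfolding meq_def using ab
      by (simp add: mtr_Om mmul_J_left mmul_J_right ee_def algebra_simps)
    finally show ?thesis .
  qed
  ultimately show ?thesis by blast
qed

end

context blocks
begin

lemma Jd_bof: "i < n \<Longrightarrow> k \<in> {1..d+1} \<Longrightarrow> Jd k i = (if bof i = k then 1 else -1)"
  using in_blk_iff[of i k] by (auto simp: Jd_def)

lemma mtr_J: "mtr (J k) = J k" by (auto simp: mtr_def Jmat_def fun_eq_iff)

lemma JJ_comm: "meq n (mmul n (J k) (J l)) (mmul n (J l) (J k))"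
  unfolding meq_def by (simp add: mmul_J_left) (simp add: Jmat_def Jd_def)

lemma JJ_id: "meq n (mmul n (J k) (J k)) Idm"
  unfolding meq_def by (simp add: mmul_J_left) (simp add: Jmat_def Jd_def Idm_def)

lemma conjR: "Defs.orthogonal_mat n U \<Longrightarrow>
  meq n (mmul n (mmul n (mtr U) (mmul n A (mmul n (mmul n U J') (mtr U)))) U) (mmul n (mmul n (mmul n (mtr U) A) U) J')"
proof -
  assume o: "Defs.orthogonal_mat n U"
  have "mmul n (mmul n (mtr U) (mmul n A (mmul n (mmul n U J') (mtr U)))) U
     = mmul n (mmul n (mmul n (mtr U) A) U) (mmul n J' (mmul n (mtr U) U))" by (simp add: mmul_assoc)
  also have "meq n \<dots> (mmul n (mmul n (mmul n (mtr U) A) U) J')"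
    by (intro mmul_cong meq_refl meq_trans[OF mmul_cong[OF meq_refl orth_left_meq[OF o]] meq_Idm_right])
  finally show ?thesis .
qed

lemma conjL: "Defs.orthogonal_mat n U \<Longrightarrow>
  meq n (mmul n (mmul n (mtr U) (mmul n (mmul n (mmul n U J') (mtr U)) A)) U) (mmul n J' (mmul n (mmul n (mtr U) A) U))"
proof -
  assume o: "Defs.orthogonal_mat n U"
  have "mmul n (mmul n (mtr U) (mmul n (mmul n (mmul n U J') (mtr U)) A)) U
     = mmul n (mtr U) (mmul n U (mmul n J' (mmul n (mmul n (mtr U) A) U)))" by (simp add: mmul_assoc)
  also have "meq n \<dots> (mmul n J' (mmul n (mmul n (mtr U) A) U))" by (rule orth_cancel_left[OF o])
  finally show ?thesis .
qed

lemma conj_cong: "meq n M1 M2 \<Longrightarrow> meq n (mmul n (mmul n (mtr U) M1) U) (mmul n (mmul n (mtr U) M2) U)"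
  by (intro mmul_cong meq_refl)

lemma conj_add: "mmul n (mmul n (mtr U) (M1 + M2)) U = mmul n (mmul n (mtr U) M1) U + mmul n (mmul n (mtr U) M2) U"
  by (simp add: mmul_add_left mmul_add_right)

lemma conj_mtr: "mtr (mmul n (mmul n (mtr U) A) U) = mmul n (mmul n (mtr U) (mtr A)) U"
  by (simp add: mtr_mmul mmul_assoc)

lemma flag_facts:
  assumes "Vs \<in> Flag ns d n" "k \<in> {1..d}" "l \<in> {1..d}"
  shows "meq n (Vs k) (mtr (Vs k))" "meq n (mmul n (Vs k) (Vs l)) (mmul n (Vs l) (Vs k))"
    "meq n (mmul n (Vs k) (Vs k)) Idm"
proof -
  obtain V where o: "Defs.orthogonal_mat n V" and te: "tup_eq n d Vs (\<lambda>k. mmul n (mmul n V (J k)) (mtr V))"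
    using assms(1) unfolding Flag_def by blast
  define Q where "Q k = mmul n (mmul n V (J k)) (mtr V)" for k
  have q: "meq n (Vs k) (Q k)" if "k \<in> {1..d}" for k using te that unfolding tup_eq_def meq_def Q_def by blast
  have QQ: "meq n (mmul n (Q k) (Q l)) (mmul n (mmul n V (mmul n (J k) (J l))) (mtr V))" for k l
  proof -
    have "mmul n (Q k) (Q l) = mmul n V (mmul n (J k) (mmul n (mmul n (mtr V) V) (mmul n (J l) (mtr V))))"
      by (simp add: Q_def mmul_assoc)
    also have "meq n \<dots> (mmul n V (mmul n (J k) (mmul n Idm (mmul n (J l) (mtr V)))))"
      by (intro mmul_cong meq_refl orth_left_meq[OF o])
    also have "meq n \<dots> (mmul n V (mmul n (J k) (mmul n (J l) (mtr V))))"
      by (intro mmul_cong meq_refl meq_Idm_left)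
    also have "\<dots> = mmul n (mmul n V (mmul n (J k) (J l))) (mtr V)" by (simp add: mmul_assoc)
    finally show ?thesis .
  qed
  show "meq n (Vs k) (mtr (Vs k))"
  proof -
    have "mtr (Q k) = Q k" by (simp add: Q_def mtr_mmul mtr_J mmul_assoc)
    thus ?thesis using q[OF assms(2)] meq_mtr[OF q[OF assms(2)]] unfolding meq_def by metis
  qed
  show "meq n (mmul n (Vs k) (Vs l)) (mmul n (Vs l) (Vs k))"
  proof -
    have "meq n (mmul n (Vs k) (Vs l)) (mmul n (Q k) (Q l))" by (intro mmul_cong q assms)
    also have "meq n \<dots> (mmul n (mmul n V (mmul n (J k) (J l))) (mtr V))" by (rule QQ)
    also have "meq n \<dots> (mmul n (mmul n V (mmul n (J l) (J k))) (mtr V))" by (intro mmul_cong meq_refl JJ_comm)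
    also have "meq n \<dots> (mmul n (Q l) (Q k))" by (rule meq_sym[OF QQ])
    also have "meq n \<dots> (mmul n (Vs l) (Vs k))" by (intro mmul_cong meq_sym[OF q] assms)
    finally show ?thesis .
  qed
  show "meq n (mmul n (Vs k) (Vs k)) Idm"
  proof -
    have "meq n (mmul n (Vs k) (Vs k)) (mmul n (Q k) (Q k))" by (intro mmul_cong q assms)
    also have "meq n \<dots> (mmul n (mmul n V (mmul n (J k) (J k))) (mtr V))" by (rule QQ)
    also have "meq n \<dots> (mmul n (mmul n V Idm) (mtr V))" by (intro mmul_cong meq_refl JJ_id)
    also have "meq n \<dots> (mmul n V (mtr V))" by (intro mmul_cong meq_refl meq_Idm_right)
    also have "meq n \<dots> Idm" by (rule orth_right_meq[OF o])
    finally show ?thesis .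
  qed
qed

end

context blocks
begin

lemma tangent_char:
  assumes o: "Defs.orthogonal_mat n U"
    and W: "W \<in> flag_tangent ns d n (\<lambda>k. mmul n (mmul n U (J k)) (mtr U))"
  shows "\<exists>Om'. skw Om' \<and> (\<forall>k\<in>{1..d}. meq n (mmul n (mmul n (mtr U) (W k)) U) (\<lambda>i j. Om' i j * ee k i j))"
proof -
  define P where "P k = mmul n (mmul n U (J k)) (mtr U)" for k
  obtain \<gamma> \<Gamma> where g1: "\<forall>s. \<gamma> s \<in> Flag ns d n" and g2: "tup_eq n d (\<gamma> 0) P"
    and g3: "\<forall>s. tup_deriv n d \<gamma> (\<Gamma> s) s" and g4: "tup_eq n d W (\<Gamma> 0)"
    using W unfolding flag_tangent_def P_def by blast
  have gP: "meq n (\<gamma> 0 k) (P k)" if "k \<in> {1..d}" for k using g2 that unfolding tup_eq_def meq_def by blast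
  have WG: "meq n (W k) (\<Gamma> 0 k)" if "k \<in> {1..d}" for k using g4 that unfolding tup_eq_def meq_def by blast
  have gd: "mat_deriv n (\<lambda>s. \<gamma> s k) (\<Gamma> 0 k) 0" if "k \<in> {1..d}" for k
    using g3 that unfolding tup_deriv_iff by blast
  define Wt where "Wt k = mmul n (mmul n (mtr U) (W k)) U" for k
  have A: "meq n (Wt k) (mtr (Wt k))" if k: "k \<in> {1..d}" for k
  proof -
    have d1: "mat_deriv n (\<lambda>s. \<gamma> s k) (mtr (\<Gamma> 0 k)) 0"
      by (rule mat_deriv_fun_cong[OF mat_deriv_mtr[OF gd[OF k]]])
         (use flag_facts(1)[OF g1[rule_format] k k] in \<open>simp add: meq_def mtr_def\<close>)
    have "meq n (\<Gamma> 0 k) (mtr (\<Gamma> 0 k))" by (rule mat_deriv_unique[OF gd[OF k] d1])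
    hence "meq n (W k) (mtr (W k))"
      using WG[OF k] meq_mtr[OF WG[OF k]] unfolding meq_def by metis
    hence "meq n (Wt k) (mmul n (mmul n (mtr U) (mtr (W k))) U)" unfolding Wt_def by (rule conj_cong)
    thus ?thesis by (simp add: Wt_def conj_mtr)
  qed
  have Bc: "meq n (Wt k + 0 + 0) (Wt k + 0)" for k by (simp add: meq_def)
  have B: "meq n (mmul n (Wt k) (J l) + mmul n (J k) (Wt l)) (mmul n (Wt l) (J k) + mmul n (J l) (Wt k))"
    if k: "k \<in> {1..d}" and l: "l \<in> {1..d}" for k l
  proof -
    have d1: "mat_deriv n (\<lambda>s. mmul n (\<gamma> s k) (\<gamma> s l)) (mmul n (\<Gamma> 0 k) (\<gamma> 0 l) + mmul n (\<gamma> 0 k) (\<Gamma> 0 l)) 0"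
      by (rule mat_deriv_mmul[OF gd[OF k] gd[OF l]])
    have d2: "mat_deriv n (\<lambda>s. mmul n (\<gamma> s k) (\<gamma> s l)) (mmul n (\<Gamma> 0 l) (\<gamma> 0 k) + mmul n (\<gamma> 0 l) (\<Gamma> 0 k)) 0"
      by (rule mat_deriv_fun_cong[OF mat_deriv_mmul[OF gd[OF l] gd[OF k]]])
         (use flag_facts(2)[OF g1[rule_format] l k] in \<open>simp add: meq_def\<close>)
    have e: "meq n (mmul n (\<Gamma> 0 k) (\<gamma> 0 l) + mmul n (\<gamma> 0 k) (\<Gamma> 0 l)) (mmul n (\<Gamma> 0 l) (\<gamma> 0 k) + mmul n (\<gamma> 0 l) (\<Gamma> 0 k))"
      by (rule mat_deriv_unique[OF d1 d2])
    have e2: "meq n (mmul n (W k) (P l) + mmul n (P k) (W l)) (mmul n (W l) (P k) + mmul n (P l) (W k))"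
    proof -
      have "meq n (mmul n (W k) (P l) + mmul n (P k) (W l)) (mmul n (\<Gamma> 0 k) (\<gamma> 0 l) + mmul n (\<gamma> 0 k) (\<Gamma> 0 l))"
        by (intro meq_add mmul_cong WG gP meq_sym[OF gP] k l)
      also note e
      also have "meq n (mmul n (\<Gamma> 0 l) (\<gamma> 0 k) + mmul n (\<gamma> 0 l) (\<Gamma> 0 k)) (mmul n (W l) (P k) + mmul n (P l) (W k))"
        by (intro meq_add mmul_cong meq_sym[OF WG] gP k l)
      finally show ?thesis .
    qed
    have "meq n (mmul n (Wt k) (J l) + mmul n (J k) (Wt l))
        (mmul n (mmul n (mtr U) (mmul n (W k) (P l) + mmul n (P k) (W l))) U)"
      unfolding conj_add P_def Wt_def by (intro meq_add meq_sym[OF conjR[OF o]] meq_sym[OF conjL[OF o]])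
    also have "meq n \<dots> (mmul n (mmul n (mtr U) (mmul n (W l) (P k) + mmul n (P l) (W k))) U)"
      by (rule conj_cong[OF e2])
    also have "meq n \<dots> (mmul n (Wt l) (J k) + mmul n (J l) (Wt k))"
      unfolding conj_add P_def Wt_def by (intro meq_add conjR[OF o] conjL[OF o])
    finally show ?thesis .
  qed
  have C: "meq n (mmul n (Wt k) (J k) + mmul n (J k) (Wt k)) 0" if k: "k \<in> {1..d}" for k
  proof -
    have d1: "mat_deriv n (\<lambda>s. mmul n (\<gamma> s k) (\<gamma> s k)) (mmul n (\<Gamma> 0 k) (\<gamma> 0 k) + mmul n (\<gamma> 0 k) (\<Gamma> 0 k)) 0"
      by (rule mat_deriv_mmul[OF gd[OF k] gd[OF k]])
    have d2: "mat_deriv n (\<lambda>s. mmul n (\<gamma> s k) (\<gamma> s k)) 0 0"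
      by (rule mat_deriv_fun_cong[OF mat_deriv_const[of n Idm]])
         (use flag_facts(3)[OF g1[rule_format] k k] in \<open>simp add: meq_def\<close>)
    have e: "meq n (mmul n (\<Gamma> 0 k) (\<gamma> 0 k) + mmul n (\<gamma> 0 k) (\<Gamma> 0 k)) 0"
      by (rule mat_deriv_unique[OF d1 d2])
    have e2: "meq n (mmul n (W k) (P k) + mmul n (P k) (W k)) 0"
    proof -
      have "meq n (mmul n (W k) (P k) + mmul n (P k) (W k)) (mmul n (\<Gamma> 0 k) (\<gamma> 0 k) + mmul n (\<gamma> 0 k) (\<Gamma> 0 k))"
        by (intro meq_add mmul_cong WG gP meq_sym[OF gP] k)
      also note e
      finally show ?thesis .
    qed
    have "meq n (mmul n (Wt k) (J k) + mmul n (J k) (Wt k))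
        (mmul n (mmul n (mtr U) (mmul n (W k) (P k) + mmul n (P k) (W k))) U)"
      unfolding conj_add P_def Wt_def by (intro meq_add meq_sym[OF conjR[OF o]] meq_sym[OF conjL[OF o]])
    also have "meq n \<dots> (mmul n (mmul n (mtr U) 0) U)"
      by (rule conj_cong[OF e2])
    also have "mmul n (mmul n (mtr U) 0) U = 0" by simp
    finally show ?thesis .
  qed
  have a: "Wt k i j = Wt k j i" if "k \<in> {1..d}" "i < n" "j < n" for k i j
    using meqD[OF A[OF that(1)] that(2,3)] by (simp add: mtr_def)
  have b: "Wt k i j * Jd l j + Jd k i * Wt l i j = Wt l i j * Jd k j + Jd l i * Wt k i j"
    if "k \<in> {1..d}" "l \<in> {1..d}" "i < n" "j < n" for k l i j
    using meqD[OF B[OF that(1,2)] that(3,4)] that(3,4) by (simp add: mmul_J_left mmul_J_right)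
  have c: "Wt k i j * Jd k j + Jd k i * Wt k i j = 0"
    if "k \<in> {1..d}" "i < n" "j < n" for k i j
    using meqD[OF C[OF that(1)] that(2,3)] that(2,3) by (simp add: mmul_J_left mmul_J_right)
  define Om' where "Om' i j = (if bof i = bof j then 0 else if bof i \<le> d then - Wt (bof i) i j / 2 else Wt (bof j) i j / 2)" for i j
  have main: "Wt k i j = Om' i j * ee k i j" if k: "k \<in> {1..d}" and ij: "i < n" "j < n" for k i j
  proof -
    have bi: "1 \<le> bof i" "bof i \<le> d+1" "1 \<le> bof j" "bof j \<le> d+1" using bof_le ij by auto
    have kk: "k \<in> {1..d+1}" using k by auto
    note Ji = Jd_bof[OF ij(1) kk] and Jj = Jd_bof[OF ij(2) kk]
    consider "k \<noteq> bof i" "k \<noteq> bof j" | "k = bof i" "bof i = bof j" | "k = bof i" "bof i \<noteq> bof j" | "k = bof j" "bof i \<noteq> bof j"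
      by (cases "k = bof i"; cases "k = bof j") auto
    thus ?thesis
    proof cases
      case 1
      have "Wt k i j = 0" using c[OF k ij] 1 Ji Jj by simp
      moreover have "ee k i j = 0" using 1 Ji Jj by (simp add: ee_def)
      ultimately show ?thesis by simp
    next
      case 2
      have "Wt k i j = 0" using c[OF k ij] 2 Ji Jj by simp
      moreover have "ee k i j = 0" using 2 Ji Jj by (simp add: ee_def)
      ultimately show ?thesis by simp
    next
      case 3
      have "ee k i j = -2" using 3 Ji Jj by (simp add: ee_def)
      moreover have "Om' i j = - Wt k i j / 2" using 3 k by (simp add: Om'_def)
      ultimately show ?thesis by simp
    next
      case 4
      have ee: "ee k i j = 2" using 4 Ji Jj by (simp add: ee_def)
      show ?thesis
      proof (cases "bof i \<le> d")
        case True
        have pk: "bof i \<in> {1..d}" using True bi by auto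
        have "Wt (bof i) i j * Jd k j + Jd (bof i) i * Wt k i j = Wt k i j * Jd (bof i) j + Jd k i * Wt (bof i) i j"
          by (rule b[OF pk k ij])
        moreover have "Jd (bof i) i = 1" "Jd (bof i) j = -1" using Jd_bof[OF ij(1)] Jd_bof[OF ij(2)] pk 4 by auto
        ultimately have "Wt k i j = - Wt (bof i) i j" using 4 Ji Jj by simp
        moreover have "Om' i j = - Wt (bof i) i j / 2" using 4 True by (simp add: Om'_def)
        ultimately show ?thesis using ee by simp
      next
        case False
        have "Om' i j = Wt k i j / 2" using 4 False by (simp add: Om'_def)
        thus ?thesis using ee by simp
      qed
    qed
  qed
  have rel: "Wt (bof j) i j = - Wt (bof i) i j" if ij: "i < n" "j < n" "bof i \<noteq> bof j" "bof i \<le> d" "bof j \<le> d" for i j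
  proof -
    have pk: "bof i \<in> {1..d}" "bof j \<in> {1..d}" using bof_le ij by auto
    have "Wt (bof j) i j = Om' i j * ee (bof j) i j" "Wt (bof i) i j = Om' i j * ee (bof i) i j"
      using main pk ij by auto
    moreover have "ee (bof j) i j = 2" "ee (bof i) i j = -2"
      using Jd_bof[OF ij(1)] Jd_bof[OF ij(2)] pk ij(3) by (auto simp: ee_def)
    ultimately show ?thesis by simp
  qed
  have sk: "skw Om'" unfolding skw_def
  proof (intro allI impI)
    fix i j assume ij: "i < n" "j < n"
    have bi: "1 \<le> bof i" "bof i \<le> d+1" "1 \<le> bof j" "bof j \<le> d+1" using bof_le ij by auto
    show "Om' i j = - Om' j i"
    proof (cases "bof i = bof j")
      case True thus ?thesis by (simp add: Om'_def)
    next
      case False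
      consider "bof i \<le> d" "bof j \<le> d" | "bof i \<le> d" "\<not> bof j \<le> d" | "\<not> bof i \<le> d" "bof j \<le> d"
        using False bi by linarith
      thus ?thesis
      proof cases
        case 1
        have "Wt (bof j) j i = Wt (bof j) i j" using a[of "bof j" j i] 1 bi ij by auto
        thus ?thesis using rel[OF ij False 1] 1 False by (simp add: Om'_def)
      next
        case 2
        have "Wt (bof i) j i = Wt (bof i) i j" using a[of "bof i" j i] 2 bi ij by auto
        thus ?thesis using 2 False by (simp add: Om'_def)
      next
        case 3
        have "Wt (bof j) j i = Wt (bof j) i j" using a[of "bof j" j i] 3 bi ij by auto
        thus ?thesis using 3 False by (simp add: Om'_def)
      qed
    qed
  qed
  show ?thesis
    by (rule exI[of _ Om']) (use sk main in \<open>auto simp: meq_def Wt_def\<close>)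
qed

end

lemma Lam_skew:
  assumes o: "\<forall>s. Defs.orthogonal_mat n (V s)" and dv: "mat_deriv n V V1 t"
    and ij: "i < n" "j < n"
  shows "mmul n (mtr (V t)) V1 i j = - mmul n (mtr (V t)) V1 j i"
proof -
  have d1: "mat_deriv n (\<lambda>s. mmul n (mtr (V s)) (V s)) (mmul n (mtr V1) (V t) + mmul n (mtr (V t)) V1) t"
    by (rule mat_deriv_mmul[OF mat_deriv_mtr[OF dv] dv])
  have d2: "mat_deriv n (\<lambda>s. mmul n (mtr (V s)) (V s)) 0 t"
    by (rule mat_deriv_fun_cong[OF mat_deriv_const[of n Idm]])
       (use o in \<open>simp add: Defs.orthogonal_mat_def Idm_def\<close>)
  have "meq n (mmul n (mtr V1) (V t) + mmul n (mtr (V t)) V1) 0" by (rule mat_deriv_unique[OF d1 d2])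
  hence "mmul n (mtr V1) (V t) i j + mmul n (mtr (V t)) V1 i j = 0" using ij by (simp add: meq_def)
  moreover have "mmul n (mtr V1) (V t) i j = mmul n (mtr (V t)) V1 j i"
    by (simp add: mmul_def mtr_def mult.commute)
  ultimately show ?thesis by simp
qed

lemma Xp_skew:
  assumes sk: "\<forall>s. skew_mat n (X s)" and dx: "mat_deriv n X X1 t" and ij: "i < n" "j < n"
  shows "X1 i j = - X1 j i"
proof -
  have a: "((\<lambda>s. X s i j) has_real_derivative X1 i j) (at t)" using dx ij unfolding mat_deriv_def by blast
  have b: "((\<lambda>s. X s j i) has_real_derivative X1 j i) (at t)" using dx ij unfolding mat_deriv_def by blast
  have "X s i j = - X s j i" for s using sk ij unfolding skew_mat_def by blast
  hence "(\<lambda>s. X s i j) = (\<lambda>s. - X s j i)" by (rule ext)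
  hence "((\<lambda>s. X s i j) has_real_derivative - X1 j i) (at t)" using DERIV_minus[OF b] by simp
  thus ?thesis using a by (rule DERIV_unique[OF _ _, rotated]) 
qed

lemma zero_deriv:
  assumes dx: "mat_deriv n X X1 t" and ij: "i < n" "j < n" and z: "\<forall>s. X s i j = 0"
  shows "X1 i j = 0"
proof -
  have a: "((\<lambda>s. X s i j) has_real_derivative X1 i j) (at t)" using dx ij unfolding mat_deriv_def by blast
  have "(\<lambda>s. X s i j) = (\<lambda>s. 0)" using z by auto
  hence "((\<lambda>s. X s i j) has_real_derivative 0) (at t)" by simp
  thus ?thesis using a DERIV_unique by blast
qed

context blocks
begin

lemma par_iff_t:
  assumes o: "Defs.orthogonal_mat n U" and skL: "skw L" and bzL: "blkzero L" and bzX: "blkzero X"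
    and skX: "skw X" and skXp: "skw Xp"
    and Dk: "\<forall>k\<in>{1..d}. meq n (mmul n (mmul n (mtr U) (D k)) U) (Zm L X Xp k)"
  shows "(\<forall>W\<in>flag_tangent ns d n (\<lambda>k. mmul n (mmul n U (J k)) (mtr U)). frob n d D W = 0)
    \<longleftrightarrow> (\<forall>i<n. \<forall>j<n. bof i \<noteq> bof j \<longrightarrow> GG L X Xp i j = GG L X Xp j i)"
proof
  assume h: "\<forall>W\<in>flag_tangent ns d n (\<lambda>k. mmul n (mmul n U (J k)) (mtr U)). frob n d D W = 0"
  show "\<forall>i<n. \<forall>j<n. bof i \<noteq> bof j \<longrightarrow> GG L X Xp i j = GG L X Xp j i"
  proof (intro allI impI)
    fix i j assume ij: "i < n" "j < n" "bof i \<noteq> bof j"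
    hence ne: "i \<noteq> j" by auto
    obtain W where W: "W \<in> flag_tangent ns d n (\<lambda>k. mmul n (mmul n U (J k)) (mtr U))"
      and Wk: "\<forall>k\<in>{1..d}. meq n (mmul n (mmul n (mtr U) (W k)) U) (\<lambda>a b. Om i j a b * ee k a b)"
      using givens_tangent[OF o ij(1,2) ne] by blast
    have "0 = frob n d D W" using h W by simp
    also have "\<dots> = (\<Sum>a<n. \<Sum>b<n. Om i j a b * GG L X Xp a b)" by (rule frob_formula[OF o Dk Wk])
    also have "\<dots> = GG L X Xp i j - GG L X Xp j i" by (rule sum_Om[OF ij(1,2) ne])
    finally show "GG L X Xp i j = GG L X Xp j i" by simp
  qed
next
  assume h: "\<forall>i<n. \<forall>j<n. bof i \<noteq> bof j \<longrightarrow> GG L X Xp i j = GG L X Xp j i"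
  have sym: "GG L X Xp i j = GG L X Xp j i" if "i < n" "j < n" for i j
    using h GG_same that by (cases "bof i = bof j") auto
  show "\<forall>W\<in>flag_tangent ns d n (\<lambda>k. mmul n (mmul n U (J k)) (mtr U)). frob n d D W = 0"
  proof
    fix W assume W: "W \<in> flag_tangent ns d n (\<lambda>k. mmul n (mmul n U (J k)) (mtr U))"
    obtain Om' where skO: "skw Om'" and Wk: "\<forall>k\<in>{1..d}. meq n (mmul n (mmul n (mtr U) (W k)) U) (\<lambda>i j. Om' i j * ee k i j)"
      using tangent_char[OF o W] by blast
    define S where "S = (\<Sum>i<n. \<Sum>j<n. Om' i j * GG L X Xp i j)"
    have pw: "Om' i j * GG L X Xp i j = - (Om' j i * GG L X Xp j i)" if ij: "i < n" "j < n" for i j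
    proof -
      have "Om' i j = - Om' j i" using skO ij unfolding skw_def by blast
      thus ?thesis using sym[OF ij] by simp
    qed
    have "S = (\<Sum>j<n. \<Sum>i<n. Om' i j * GG L X Xp i j)" unfolding S_def by (rule sum.swap)
    also have "\<dots> = (\<Sum>j<n. \<Sum>i<n. - (Om' j i * GG L X Xp j i))"
      by (intro sum.cong refl) (rule pw; simp)
    also have "\<dots> = - S" unfolding S_def by (simp add: sum_negf)
    finally have "S = 0" by simp
    thus "frob n d D W = 0" using frob_formula[OF o Dk Wk] S_def by simp
  qed
qed

lemma RR_same: "i < n \<Longrightarrow> j < n \<Longrightarrow> bof i = bof j \<Longrightarrow> RR L X i j = 0"
  unfolding RR_def using same_blk_iff[of i j] lt_N_iff[of i] lt_N_iff[of j] by auto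

lemma sum_minus2: "finite S \<Longrightarrow> k \<in> S \<Longrightarrow> q \<in> S \<Longrightarrow> k \<noteq> q \<Longrightarrow>
   (\<Sum>s\<in>S - {k, q}. (g s :: real)) = (\<Sum>s\<in>S. g s) - g k - g q"
proof -
  assume h: "finite S" "k \<in> S" "q \<in> S" "k \<noteq> q"
  have "(\<Sum>s\<in>S. g s) = g k + (\<Sum>s\<in>S - {k}. g s)" using h by (simp add: sum.remove)
  also have "(\<Sum>s\<in>S - {k}. g s) = g q + (\<Sum>s\<in>S - {k} - {q}. g s)" using h by (subst sum.remove[of _ q]) auto
  also have "S - {k} - {q} = S - {k, q}" by auto
  finally show ?thesis by simp
qed

lemma F1_eq:
  assumes kq: "1 \<le> k" "k < q" "q \<le> d + 1" and i: "i \<in> B k" and j: "j \<in> B q"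
    and bzX: "blkzero X" and bzL: "blkzero L"
  shows "(- 2 * Xp i j
          + (\<Sum>s\<in>{1..d+1} - {k, q}. \<Sum>r\<in>B s. X i r * L r j - L i r * X r j)
          + (if q = d + 1 then (\<Sum>l\<in>{1..d} - {k}. \<Sum>r\<in>B l. X i r * L r (j) + L i r * X r j) else 0) = 0)
     \<longleftrightarrow> 2 * Xp i j = RR L X i j"
proof -
  have kk: "k \<in> {1..d+1}" "q \<in> {1..d+1}" using kq by auto
  have in_: "i < n" "j < n" using blk_lt_n kk i j by auto
  have bi: "bof i = k" "bof j = q" using blk_unique kk i j by auto
  have zk: "X i r = 0" "L i r = 0" if "r \<in> B k" for r
    using bzX bzL that blk_unique[OF kk(1) that] blk_lt_n[OF kk(1) that] in_ bi unfolding blkzero_def by auto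
  have zq: "X r j = 0" "L r j = 0" if "r \<in> B q" for r
    using bzX bzL that blk_unique[OF kk(2) that] blk_lt_n[OF kk(2) that] in_ bi unfolding blkzero_def by auto
  have s1: "(\<Sum>s\<in>{1..d+1} - {k, q}. \<Sum>r\<in>B s. X i r * L r j - L i r * X r j) = mmul n X L i j - mmul n L X i j"
  proof -
    have "(\<Sum>s\<in>{1..d+1} - {k, q}. \<Sum>r\<in>B s. X i r * L r j - L i r * X r j)
       = (\<Sum>s\<in>{1..d+1}. \<Sum>r\<in>B s. X i r * L r j - L i r * X r j) - (\<Sum>r\<in>B k. X i r * L r j - L i r * X r j) - (\<Sum>r\<in>B q. X i r * L r j - L i r * X r j)"
      by (rule sum_minus2) (use kk kq in auto)
    also have "(\<Sum>r\<in>B k. X i r * L r j - L i r * X r j) = 0" by (simp add: zk)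
    also have "(\<Sum>r\<in>B q. X i r * L r j - L i r * X r j) = 0" by (simp add: zq)
    also have "(\<Sum>s\<in>{1..d+1}. \<Sum>r\<in>B s. X i r * L r j - L i r * X r j) = (\<Sum>r<n. X i r * L r j - L i r * X r j)"
      by (rule blk_sum_all)
    finally show ?thesis by (simp add: mmul_def sum_subtractf)
  qed
  have nsb: "\<not> (\<exists>p\<in>{1..d+1}. i \<in> B p \<and> j \<in> B p)" using same_blk_iff[OF in_] bi kq by auto
  have iN: "i < ns d" using lt_N_iff[OF in_(1)] bi kq by auto
  show ?thesis
  proof (cases "q = d + 1")
    case True
    have jN: "ns d \<le> j" using lt_N_iff[OF in_(2)] bi True by auto
    have "(\<Sum>l\<in>{1..d} - {k}. \<Sum>r\<in>B l. X i r * L r j + L i r * X r j)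
        = (\<Sum>l\<in>{1..d}. \<Sum>r\<in>B l. X i r * L r j + L i r * X r j) - (\<Sum>r\<in>B k. X i r * L r j + L i r * X r j)"
      using kq True by (subst sum_diff1) auto
    also have "(\<Sum>r\<in>B k. X i r * L r j + L i r * X r j) = 0" by (simp add: zk)
    also have "(\<Sum>l\<in>{1..d}. \<Sum>r\<in>B l. X i r * L r j + L i r * X r j) = (\<Sum>r<ns d. X i r * L r j + L i r * X r j)"
      by (rule blk_sum_d)
    finally have s2: "(\<Sum>l\<in>{1..d} - {k}. \<Sum>r\<in>B l. X i r * L r j + L i r * X r j) = (\<Sum>r<ns d. X i r * L r j + L i r * X r j)"
      by simp
    show ?thesis unfolding s1 s2 RR_def if_not_P[OF nsb] using True iN jN by auto
  next
    case False
    have jN: "j < ns d" using lt_N_iff[OF in_(2)] bi False kq by auto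
    show ?thesis unfolding s1 RR_def if_not_P[OF nsb] using False iN jN by auto
  qed
qed

end

theorem propositionA3:
  fixes n d :: nat and ns :: "nat \<Rightarrow> nat"
    and V V' X X' :: "real \<Rightarrow> nat \<Rightarrow> nat \<Rightarrow> real"
  assumes d_pos: "d \<ge> 1"
    and ns_first: "0 < ns 1" and ns_mono: "\<forall>k. 1 \<le> k \<and> k < d \<longrightarrow> ns k < ns (Suc k)"
    and ns_last: "ns d < n"
    and V_orth: "\<forall>t. orthogonal_mat n (V t)"
    and V_deriv: "\<forall>t. mat_deriv n V (V' t) t"
    and Lam_blk: "\<forall>t. \<forall>k\<in>{1..d+1}. \<forall>i\<in>blk ns d n k. \<forall>j\<in>blk ns d n k.
                    mmul n (mtr (V t)) (V' t) i j = 0"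
    and X_skew: "\<forall>t. skew_mat n (X t)"
    and X_deriv: "\<forall>t. mat_deriv n X (X' t) t"
    and X_blk: "\<forall>t. \<forall>k\<in>{1..d+1}. \<forall>i\<in>blk ns d n k. \<forall>j\<in>blk ns d n k. X t i j = 0"
  shows "let Lam = (\<lambda>t. mmul n (mtr (V t)) (V' t));
             J = Jmat ns d n;
             B = blk ns d n;
             N = ns d;
             c = (\<lambda>t k. mmul n (mmul n (V t) (J k)) (mtr (V t)));
             Y = (\<lambda>t k. mmul n (mmul n (V t)
                    (\<lambda>i j. mmul n (X t) (J k) i j - mmul n (J k) (X t) i j)) (mtr (V t)))
         in (parallel_along ns d n c Y \<longleftrightarrow>
              (\<forall>t. \<forall>k q. 1 \<le> k \<and> k < q \<and> q \<le> d + 1 \<longrightarrow>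
                 (\<forall>i\<in>B k. \<forall>j\<in>B q.
                    - 2 * X' t i j
                    + (\<Sum>s\<in>{1..d+1} - {k, q}. \<Sum>r\<in>B s.
                          X t i r * Lam t r j - Lam t i r * X t r j)
                    + (if q = d + 1 then
                         (\<Sum>l\<in>{1..d} - {k}. \<Sum>r\<in>B l.
                            X t i r * Lam t r (j) + Lam t i r * X t r j)
                       else 0) = 0)))
          \<and> (parallel_along ns d n c Y \<longleftrightarrow>
              (\<forall>t. \<forall>i<n. \<forall>j<n.
                 2 * X' t i j =
                   (if (\<exists>p\<in>{1..d+1}. i \<in> B p \<and> j \<in> B p) then 0
                    else mmul n (X t) (Lam t) i j - mmul n (Lam t) (X t) i j)
                   + (if i < N \<and> N \<le> j then
                        (\<Sum>r<N. X t i r * Lam t r j + Lam t i r * X t r j)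
                      else if N \<le> i \<and> j < N then
                        - (\<Sum>r<N. X t j r * Lam t r i + Lam t j r * X t r i)
                      else 0)))"
proof -
  interpret blocks n d ns using d_pos ns_first ns_mono ns_last by unfold_locales
  define Lm where "Lm t = mmul n (mtr (V t)) (V' t)" for t
  define cf where "cf = (\<lambda>t k. mmul n (mmul n (V t) (Jmat ns d n k)) (mtr (V t)))"
  define Yf where "Yf = (\<lambda>t k. mmul n (mmul n (V t)
                    (\<lambda>i j. mmul n (X t) (Jmat ns d n k) i j - mmul n (Jmat ns d n k) (X t) i j)) (mtr (V t)))"
  have skL: "skw (Lm t)" for t
    unfolding skw_def Lm_def using Lam_skew[OF V_orth V_deriv[rule_format]] by blast
  have bzL: "blkzero (Lm t)" for t
    unfolding blkzero_def
  proof (intro allI impI)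
    fix i j assume ij: "i < n" "j < n" "bof i = bof j"
    have "bof i \<in> {1..d+1}" "i \<in> B (bof i)" "j \<in> B (bof i)"
      using bof_props(1)[OF ij(1)] bof_props(2)[OF ij(1)] bof_props(2)[OF ij(2)] ij(3) by auto
    thus "Lm t i j = 0" unfolding Lm_def using Lam_blk by blast
  qed
  have bzX: "blkzero (X t)" for t
    unfolding blkzero_def
  proof (intro allI impI)
    fix i j assume ij: "i < n" "j < n" "bof i = bof j"
    have "bof i \<in> {1..d+1}" "i \<in> B (bof i)" "j \<in> B (bof i)"
      using bof_props(1)[OF ij(1)] bof_props(2)[OF ij(1)] bof_props(2)[OF ij(2)] ij(3) by auto
    thus "X t i j = 0" using X_blk by blast
  qed
  have skX: "skw (X t)" for t using X_skew unfolding skw_def skew_mat_def by blast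
  have skXp: "skw (X' t)" for t unfolding skw_def using Xp_skew[OF X_skew X_deriv[rule_format]] by blast
  have Xp0: "X' t i j = 0" if "i < n" "j < n" "bof i = bof j" for t i j
    using zero_deriv[OF X_deriv[rule_format] that(1,2)] bzX that unfolding blkzero_def by blast
  define D0 where "D0 t k = mmul n (mmul n (V' t) (Am (X t) k) + mmul n (V t) (Am (X' t) k)) (mtr (V t))
      + mmul n (mmul n (V t) (Am (X t) k)) (mtr (V' t))" for t k
  have AmEq: "(\<lambda>i j. mmul n (X t) (J k) i j - mmul n (J k) (X t) i j) = Am (X t) k" for t k
    by (simp add: Am_def fun_eq_iff)
  have Ad: "mat_deriv n (\<lambda>s. Am (X s) k) (Am (X' t) k) t" for t k
  proof -
    have "mat_deriv n (\<lambda>s. mmul n (X s) (J k) - mmul n (J k) (X s))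
       ((mmul n (X' t) (J k) + mmul n (X t) 0) - (mmul n 0 (X t) + mmul n (J k) (X' t))) t"
      by (rule mat_deriv_diff[OF mat_deriv_mmul[OF X_deriv[rule_format] mat_deriv_const]
                                 mat_deriv_mmul[OF mat_deriv_const X_deriv[rule_format]]])
    thus ?thesis by (simp add: Am_def)
  qed
  have Yd: "tup_deriv n d Yf (D0 t) t" for t
    unfolding tup_deriv_iff Yf_def AmEq D0_def using conj_deriv[OF V_deriv[rule_format] Ad] by blast
  have Dk: "\<forall>k\<in>{1..d}. meq n (mmul n (mmul n (mtr (V t)) (D0 t k)) (V t)) (Zm (Lm t) (X t) (X' t) k)" for t
    unfolding D0_def Zm_def Lm_def using frame_D[OF V_orth[rule_format]] by blast
  define GC where "GC t \<longleftrightarrow> (\<forall>i<n. \<forall>j<n. bof i \<noteq> bof j \<longrightarrow> GG (Lm t) (X t) (X' t) i j = GG (Lm t) (X t) (X' t) j i)" for t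
  have par: "parallel_along ns d n cf Yf \<longleftrightarrow> (\<forall>t. GC t)"
  proof -
    have "(\<exists>D. tup_deriv n d Yf D t \<and> (\<forall>W\<in>flag_tangent ns d n (cf t). frob n d D W = 0)) \<longleftrightarrow> GC t" for t
    proof -
      have same: "frob n d D W = frob n d (D0 t) W" if "tup_deriv n d Yf D t" for D W
      proof -
        have "D k i j = D0 t k i j" if "k \<in> {1..d}" "i < n" "j < n" for k i j
          using \<open>tup_deriv n d Yf D t\<close> Yd[of t] that unfolding tup_deriv_def by (meson DERIV_unique)
        thus ?thesis unfolding frob_def by (intro sum.cong refl) auto
      qed
      have "(\<exists>D. tup_deriv n d Yf D t \<and> (\<forall>W\<in>flag_tangent ns d n (cf t). frob n d D W = 0))
          \<longleftrightarrow> (\<forall>W\<in>flag_tangent ns d n (cf t). frob n d (D0 t) W = 0)"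
        using same Yd by metis
      also have "\<dots> \<longleftrightarrow> GC t" unfolding GC_def cf_def
        by (rule par_iff_t[OF V_orth[rule_format] skL bzL bzX skX skXp Dk])
      finally show ?thesis .
    qed
    thus ?thesis unfolding parallel_along_def by blast
  qed
  have f2: "(\<forall>t. \<forall>i<n. \<forall>j<n. 2 * X' t i j = RR (Lm t) (X t) i j) \<longleftrightarrow> (\<forall>t. GC t)"
  proof -
    have "(\<forall>i<n. \<forall>j<n. 2 * X' t i j = RR (Lm t) (X t) i j) \<longleftrightarrow> GC t" for t
    proof -
      have "(2 * X' t i j = RR (Lm t) (X t) i j) \<longleftrightarrow> (bof i \<noteq> bof j \<longrightarrow> GG (Lm t) (X t) (X' t) i j = GG (Lm t) (X t) (X' t) j i)"
        if ij: "i < n" "j < n" for i j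
      proof (cases "bof i = bof j")
        case True thus ?thesis using Xp0[OF ij True] RR_same[OF ij True] by simp
      next
        case False thus ?thesis using core_sym[OF ij False bzX bzL skX skL skXp] by simp
      qed
      thus ?thesis unfolding GC_def by blast
    qed
    thus ?thesis by blast
  qed
  have f1: "(\<forall>t. \<forall>k q. 1 \<le> k \<and> k < q \<and> q \<le> d + 1 \<longrightarrow>
                 (\<forall>i\<in>B k. \<forall>j\<in>B q.
                    - 2 * X' t i j
                    + (\<Sum>s\<in>{1..d+1} - {k, q}. \<Sum>r\<in>B s.
                          X t i r * Lm t r j - Lm t i r * X t r j)
                    + (if q = d + 1 then
                         (\<Sum>l\<in>{1..d} - {k}. \<Sum>r\<in>B l.
                            X t i r * Lm t r (j) + Lm t i r * X t r j)
                       else 0) = 0)) \<longleftrightarrow> (\<forall>t. GC t)"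
  proof -
    have gsym: "GG (Lm t) (X t) (X' t) i j = GG (Lm t) (X t) (X' t) j i \<longleftrightarrow> 2 * X' t i j = RR (Lm t) (X t) i j"
      if "i < n" "j < n" "bof i \<noteq> bof j" for t i j
      by (rule core_sym[OF that bzX bzL skX skL skXp])
    have "(\<forall>k q. 1 \<le> k \<and> k < q \<and> q \<le> d + 1 \<longrightarrow>
                 (\<forall>i\<in>B k. \<forall>j\<in>B q.
                    - 2 * X' t i j
                    + (\<Sum>s\<in>{1..d+1} - {k, q}. \<Sum>r\<in>B s.
                          X t i r * Lm t r j - Lm t i r * X t r j)
                    + (if q = d + 1 then
                         (\<Sum>l\<in>{1..d} - {k}. \<Sum>r\<in>B l.
                            X t i r * Lm t r (j) + Lm t i r * X t r j)
                       else 0) = 0)) \<longleftrightarrow> GC t" for t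
    proof
      assume h: "\<forall>k q. 1 \<le> k \<and> k < q \<and> q \<le> d + 1 \<longrightarrow>
                 (\<forall>i\<in>B k. \<forall>j\<in>B q.
                    - 2 * X' t i j
                    + (\<Sum>s\<in>{1..d+1} - {k, q}. \<Sum>r\<in>B s.
                          X t i r * Lm t r j - Lm t i r * X t r j)
                    + (if q = d + 1 then
                         (\<Sum>l\<in>{1..d} - {k}. \<Sum>r\<in>B l.
                            X t i r * Lm t r (j) + Lm t i r * X t r j)
                       else 0) = 0)"
      have lt: "GG (Lm t) (X t) (X' t) i j = GG (Lm t) (X t) (X' t) j i"
        if ij: "i < n" "j < n" "bof i < bof j" for i j
      proof -
        have b: "1 \<le> bof i" "bof j \<le> d + 1" "i \<in> B (bof i)" "j \<in> B (bof j)" using bof_props ij(1,2) by auto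
        have "2 * X' t i j = RR (Lm t) (X t) i j"
          using h[rule_format, OF _ b(3,4)] F1_eq[OF b(1) ij(3) b(2) b(3,4) bzX bzL] b ij(3) by blast
        thus ?thesis using gsym[OF ij(1,2)] ij(3) by simp
      qed
      show "GC t" unfolding GC_def
      proof (intro allI impI)
        fix i j assume ij: "i < n" "j < n" "bof i \<noteq> bof j"
        show "GG (Lm t) (X t) (X' t) i j = GG (Lm t) (X t) (X' t) j i"
        proof (cases "bof i < bof j")
          case True thus ?thesis using lt ij by blast
        next
          case False hence "bof j < bof i" using ij(3) by linarith
          thus ?thesis using lt ij by (metis)
        qed
      qed
    next
      assume g: "GC t"
      show "\<forall>k q. 1 \<le> k \<and> k < q \<and> q \<le> d + 1 \<longrightarrow>
                 (\<forall>i\<in>B k. \<forall>j\<in>B q.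
                    - 2 * X' t i j
                    + (\<Sum>s\<in>{1..d+1} - {k, q}. \<Sum>r\<in>B s.
                          X t i r * Lm t r j - Lm t i r * X t r j)
                    + (if q = d + 1 then
                         (\<Sum>l\<in>{1..d} - {k}. \<Sum>r\<in>B l.
                            X t i r * Lm t r (j) + Lm t i r * X t r j)
                       else 0) = 0)"
      proof (intro allI impI ballI)
        fix k q i j assume kq: "1 \<le> k \<and> k < q \<and> q \<le> d + 1" and i: "i \<in> B k" and j: "j \<in> B q"
        have kk: "k \<in> {1..d+1}" "q \<in> {1..d+1}" using kq by auto
        have in_: "i < n" "j < n" using blk_lt_n kk i j by auto
        have bi: "bof i = k" "bof j = q" using blk_unique kk i j by auto
        have "2 * X' t i j = RR (Lm t) (X t) i j"
          using g gsym[OF in_] bi kq unfolding GC_def by (metis in_ less_irrefl)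
        thus "- 2 * X' t i j
                    + (\<Sum>s\<in>{1..d+1} - {k, q}. \<Sum>r\<in>B s.
                          X t i r * Lm t r j - Lm t i r * X t r j)
                    + (if q = d + 1 then
                         (\<Sum>l\<in>{1..d} - {k}. \<Sum>r\<in>B l.
                            X t i r * Lm t r (j) + Lm t i r * X t r j)
                       else 0) = 0"
          using F1_eq[of k q i j "X t" "Lm t" "X' t"] kq i j bzX bzL by blast
      qed
    qed
    thus ?thesis by blast
  qed
  show ?thesis
    unfolding Let_def
    using par[unfolded cf_def Yf_def] f1[unfolded Lm_def] f2[unfolded Lm_def RR_def]
    by blast
qed

end
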